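(* Let $T_n$ be a tree with $n$ nodes, rooted at $r$, with depth $l_{\max}$, and let $k$ initial messages be located at some nodes of the tree. Consider the algebraic gossip \texttt{EXCHANGE} protocol in which the communication partner of every non-root node is fixed to be its parent in $T_n$ throughout the protocol. Then the time needed for all nodes to learn all $k$ messages is $O(k+\log n+l_{\max})$ rounds with probability at least $1-\tfrac{2}{n}$, in both the synchronous and the asynchronous time model.
   Context: Asynchronous time model: each timeslot one node chosen independently and uniformly at random acts; $n$ timeslots form a round. Synchronous time model: in each round every node acts; information received in a round can be sent only from the next round. When a node acts it performs \texttt{EXCHANGE} with its partner: both send a message to each other. Algebraic gossip: the $k$ initial messages $x_1,\dots,x_k\in\mathbb{F}_q^r$ ($q\ge2$); nodes store linear equations over $\mathbb{F}_q$ in the unknowns $x_i$ (initially those of the messages they hold); a sent message is a random linear combination of the sender's stored equations with coefficients uniform in $\mathbb{F}_q$; a received equation is stored iff it is linearly independent of the stored ones; a node learns all messages when its rank reaches $k$. *)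

theory Defs
  imports "HOL-Algebra.Ring" "HOL-Probability.Probability_Mass_Function"
begin

text \<open>A linear equation in the unknowns x_1..x_k is identified with its coefficient
vector, a list of length k of elements of the field R.\<close>

definition vzero :: "nat ring \<Rightarrow> nat \<Rightarrow> nat list" where
  "vzero R k = replicate k \<zero>\<^bsub>R\<^esub>"

definition unitv :: "nat ring \<Rightarrow> nat \<Rightarrow> nat \<Rightarrow> nat list" where
  "unitv R k i = map (\<lambda>j. if j = i then \<one>\<^bsub>R\<^esub> else \<zero>\<^bsub>R\<^esub>) [0..<k]"

definition vadd :: "nat ring \<Rightarrow> nat list \<Rightarrow> nat list \<Rightarrow> nat list" where
  "vadd R u v = map2 (\<lambda>a b. a \<oplus>\<^bsub>R\<^esub> b) u v"

definition vsmult :: "nat ring \<Rightarrow> nat \<Rightarrow> nat list \<Rightarrow> nat list" where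
  "vsmult R c v = map (\<lambda>a. c \<otimes>\<^bsub>R\<^esub> a) v"

definition lincomb :: "nat ring \<Rightarrow> nat \<Rightarrow> nat list \<Rightarrow> nat list list \<Rightarrow> nat list" where
  "lincomb R k cs S = foldr (\<lambda>(c, e) acc. vadd R (vsmult R c e) acc) (zip cs S) (vzero R k)"

definition in_span :: "nat ring \<Rightarrow> nat \<Rightarrow> nat list list \<Rightarrow> nat list \<Rightarrow> bool" where
  "in_span R k S v \<longleftrightarrow>
     (\<exists>cs. length cs = length S \<and> set cs \<subseteq> carrier R \<and> v = lincomb R k cs S)"

definition store :: "nat ring \<Rightarrow> nat \<Rightarrow> nat list list \<Rightarrow> nat list \<Rightarrow> nat list list" where
  "store R k S v = (if in_span R k S v then S else S @ [v])"

primrec rand_comb :: "nat ring \<Rightarrow> nat \<Rightarrow> nat list list \<Rightarrow> nat list pmf" where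
  "rand_comb R k [] = return_pmf (vzero R k)"
| "rand_comb R k (e # es) =
     bind_pmf (pmf_of_set (carrier R)) (\<lambda>c.
     bind_pmf (rand_comb R k es) (\<lambda>v. return_pmf (vadd R (vsmult R c e) v)))"

text \<open>A node has learned all messages when every x_i is decodable, i.e. rank k.\<close>
definition learned_all :: "nat ring \<Rightarrow> nat \<Rightarrow> nat list list \<Rightarrow> bool" where
  "learned_all R k S \<longleftrightarrow> (\<forall>i<k. in_span R k S (unitv R k i))"

type_synonym gstate = "nat \<Rightarrow> nat list list"

definition all_learned :: "nat ring \<Rightarrow> nat \<Rightarrow> nat \<Rightarrow> gstate \<Rightarrow> bool" where
  "all_learned R k n st \<longleftrightarrow> (\<forall>v<n. learned_all R k (st v))"

definition init_state :: "nat ring \<Rightarrow> nat \<Rightarrow> (nat \<Rightarrow> nat) \<Rightarrow> gstate" where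
  "init_state R k loc = (\<lambda>w. [unitv R k i. i \<leftarrow> [0..<k], loc i = w])"

definition is_rooted_tree :: "nat \<Rightarrow> nat \<Rightarrow> (nat \<Rightarrow> nat) \<Rightarrow> bool" where
  "is_rooted_tree n r par \<longleftrightarrow> r < n \<and> (\<forall>v<n. v \<noteq> r \<longrightarrow> par v < n)
     \<and> (\<forall>v<n. \<exists>m. (par ^^ m) v = r)"

definition depth :: "(nat \<Rightarrow> nat) \<Rightarrow> nat \<Rightarrow> nat \<Rightarrow> nat" where
  "depth par r v = (LEAST m. (par ^^ m) v = r)"

definition lmax :: "nat \<Rightarrow> nat \<Rightarrow> (nat \<Rightarrow> nat) \<Rightarrow> nat" where
  "lmax n r par = Max (depth par r ` {..<n})"

definition exchange :: "nat ring \<Rightarrow> nat \<Rightarrow> nat \<Rightarrow> nat \<Rightarrow> gstate \<Rightarrow> gstate pmf" where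
  "exchange R k u p st =
     bind_pmf (rand_comb R k (st u)) (\<lambda>a.
     bind_pmf (rand_comb R k (st p)) (\<lambda>b.
     return_pmf (st(p := store R k (st p) a, u := store R k (st u) b))))"

definition async_step :: "nat ring \<Rightarrow> nat \<Rightarrow> nat \<Rightarrow> nat \<Rightarrow> (nat \<Rightarrow> nat) \<Rightarrow> gstate \<Rightarrow> gstate pmf" where
  "async_step R k n r par st =
     bind_pmf (pmf_of_set {..<n}) (\<lambda>v. if v = r then return_pmf st else exchange R k v (par v) st)"

primrec pmf_seq :: "'a pmf list \<Rightarrow> 'a list pmf" where
  "pmf_seq [] = return_pmf []"
| "pmf_seq (p # ps) = bind_pmf p (\<lambda>x. bind_pmf (pmf_seq ps) (\<lambda>xs. return_pmf (x # xs)))"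

text \<open>Synchronous round: every non-root node v performs EXCHANGE with par v; all
messages are computed from the states at the beginning of the round (independent
coefficients for every message), and are stored at the end of the round.\<close>
definition sync_step :: "nat ring \<Rightarrow> nat \<Rightarrow> nat \<Rightarrow> nat \<Rightarrow> (nat \<Rightarrow> nat) \<Rightarrow> gstate \<Rightarrow> gstate pmf" where
  "sync_step R k n r par st =
     bind_pmf (pmf_seq (map (\<lambda>v. pair_pmf (rand_comb R k (st v)) (rand_comb R k (st (par v)))) [0..<n]))
       (\<lambda>msgs. return_pmf (\<lambda>w. if w < n then
          fold (\<lambda>e S. store R k S e)
            ([fst (msgs ! v). v \<leftarrow> [0..<n], v \<noteq> r, par v = w]
             @ (if w \<noteq> r then [snd (msgs ! w)] else []))
            (st w)
        else st w))"

primrec pmf_iter :: "('a \<Rightarrow> 'a pmf) \<Rightarrow> nat \<Rightarrow> 'a \<Rightarrow> 'a pmf" where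
  "pmf_iter f 0 s = return_pmf s"
| "pmf_iter f (Suc t) s = bind_pmf (pmf_iter f t s) f"

end

theory Submission
  imports Defs
begin

definition wfv :: "nat ring \<Rightarrow> nat \<Rightarrow> nat list \<Rightarrow> bool" where
  "wfv R k v \<longleftrightarrow> length v = k \<and> set v \<subseteq> carrier R"

fun dot :: "nat ring \<Rightarrow> nat list \<Rightarrow> nat list \<Rightarrow> nat" where
  "dot R (a # as) (b # bs) = a \<otimes>\<^bsub>R\<^esub> b \<oplus>\<^bsub>R\<^esub> dot R as bs"
| "dot R _ _ = \<zero>\<^bsub>R\<^esub>"

definition knows :: "nat ring \<Rightarrow> nat list \<Rightarrow> nat list list \<Rightarrow> bool" where
  "knows R \<mu> S \<longleftrightarrow> (\<exists>s\<in>set S. dot R \<mu> s \<noteq> \<zero>\<^bsub>R\<^esub>)"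

definition wfS :: "nat ring \<Rightarrow> nat \<Rightarrow> nat list list \<Rightarrow> bool" where
  "wfS R k S \<longleftrightarrow> (\<forall>s\<in>set S. wfv R k s)"

locale nfield = field R for R :: "nat ring" (structure)

context nfield
begin

lemma wfv_Cons[simp]: "wfv R (Suc k) (a # v) \<longleftrightarrow> a \<in> carrier R \<and> wfv R k v"
  by (auto simp: wfv_def)

lemma wfv_0[simp]: "wfv R 0 v \<longleftrightarrow> v = []"
  by (auto simp: wfv_def)

lemma wfv_nth: "wfv R k v \<Longrightarrow> i < k \<Longrightarrow> v ! i \<in> carrier R"
  by (auto simp: wfv_def)

lemma length_vadd[simp]: "length (vadd R u v) = min (length u) (length v)"
  by (simp add: vadd_def)

lemma nth_vadd[simp]: "i < length u \<Longrightarrow> i < length v \<Longrightarrow> vadd R u v ! i = u ! i \<oplus> v ! i"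
  by (simp add: vadd_def)

lemma length_vsmult[simp]: "length (vsmult R c v) = length v"
  by (simp add: vsmult_def)

lemma nth_vsmult[simp]: "i < length v \<Longrightarrow> vsmult R c v ! i = c \<otimes> v ! i"
  by (simp add: vsmult_def)

lemma length_vzero[simp]: "length (vzero R k) = k"
  by (simp add: vzero_def)

lemma nth_vzero[simp]: "i < k \<Longrightarrow> vzero R k ! i = \<zero>"
  by (simp add: vzero_def)

lemma vadd_Cons[simp]: "vadd R (a # u) (b # v) = (a \<oplus> b) # vadd R u v"
  by (simp add: vadd_def)

lemma vsmult_Cons[simp]: "vsmult R c (a # u) = (c \<otimes> a) # vsmult R c u"
  by (simp add: vsmult_def)

lemma vzero_Suc[simp]: "vzero R (Suc k) = \<zero> # vzero R k"
  by (simp add: vzero_def)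

lemma wfv_vadd[intro]: "wfv R k u \<Longrightarrow> wfv R k v \<Longrightarrow> wfv R k (vadd R u v)"
proof -
  assume a: "wfv R k u" "wfv R k v"
  have "x \<in> carrier R" if "x \<in> set (vadd R u v)" for x
  proof -
    from that a obtain i where i: "i < k" "x = vadd R u v ! i" by (auto simp: in_set_conv_nth wfv_def)
    then have "x = u ! i \<oplus> v ! i" using a by (simp add: wfv_def)
    moreover have "u ! i \<in> carrier R" "v ! i \<in> carrier R" using a i by (auto simp: wfv_def)
    ultimately show "x \<in> carrier R" by simp
  qed
  then show ?thesis using a by (auto simp: wfv_def)
qed

lemma wfv_vsmult[intro]: "c \<in> carrier R \<Longrightarrow> wfv R k v \<Longrightarrow> wfv R k (vsmult R c v)"
  unfolding wfv_def vsmult_def by auto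

lemma wfv_vzero[intro]: "wfv R k (vzero R k)"
  unfolding wfv_def vzero_def by auto

lemma wfv_unitv[intro]: "wfv R k (unitv R k i)"
  unfolding wfv_def unitv_def by auto

lemma wfv_eqI: "wfv R k u \<Longrightarrow> wfv R k v \<Longrightarrow> (\<And>i. i < k \<Longrightarrow> u ! i = v ! i) \<Longrightarrow> u = v"
  unfolding wfv_def by (auto intro: nth_equalityI)

lemma dot_carrier[intro]: "set \<mu> \<subseteq> carrier R \<Longrightarrow> set v \<subseteq> carrier R \<Longrightarrow> dot R \<mu> v \<in> carrier R"
proof (induction \<mu> arbitrary: v)
  case Nil then show ?case by simp
next
  case (Cons a as) then show ?case by (cases v) auto
qed

lemma dot_vadd: "wfv R k \<mu> \<Longrightarrow> wfv R k u \<Longrightarrow> wfv R k v \<Longrightarrow>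
    dot R \<mu> (vadd R u v) = dot R \<mu> u \<oplus> dot R \<mu> v"
proof (induction k arbitrary: \<mu> u v)
  case 0 then show ?case by simp
next
  case (Suc k)
  then obtain m ms a as b bs where e: "\<mu> = m # ms" "u = a # as" "v = b # bs"
    by (metis length_Suc_conv wfv_def)
  have c: "m \<in> carrier R" "a \<in> carrier R" "b \<in> carrier R"
    "dot R ms as \<in> carrier R" "dot R ms bs \<in> carrier R"
    using Suc.prems e by (auto simp: wfv_def)
  have IH: "dot R ms (vadd R as bs) = dot R ms as \<oplus> dot R ms bs"
    using Suc e by simp
  show ?case using c by (simp add: e IH r_distr a_ac)
qed

lemma dot_vsmult: "c \<in> carrier R \<Longrightarrow> wfv R k \<mu> \<Longrightarrow> wfv R k v \<Longrightarrow>
    dot R \<mu> (vsmult R c v) = c \<otimes> dot R \<mu> v"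
proof (induction k arbitrary: \<mu> v)
  case 0 then show ?case by simp
next
  case (Suc k)
  then obtain m ms a as where e: "\<mu> = m # ms" "v = a # as"
    by (metis length_Suc_conv wfv_def)
  have c: "m \<in> carrier R" "a \<in> carrier R" "dot R ms as \<in> carrier R"
    using Suc.prems e by (auto simp: wfv_def)
  have IH: "dot R ms (vsmult R c as) = c \<otimes> dot R ms as"
    using Suc e by simp
  show ?case using c Suc.prems(1) by (simp add: e IH r_distr m_ac)
qed

lemma dot_vzero: "wfv R k \<mu> \<Longrightarrow> dot R \<mu> (vzero R k) = \<zero>"
proof (induction k arbitrary: \<mu>)
  case 0 then show ?case by simp
next
  case (Suc k)
  then obtain m ms where e: "\<mu> = m # ms" by (metis length_Suc_conv wfv_def)
  then show ?case using Suc by simp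
qed

lemma dot_unitv: "wfv R k \<mu> \<Longrightarrow> i < k \<Longrightarrow> dot R \<mu> (unitv R k i) = \<mu> ! i"
proof -
  have "\<And>\<mu> j. wfv R m \<mu> \<Longrightarrow> dot R \<mu> (map (\<lambda>x. if x = i then \<one> else \<zero>) [j..<j+m])
        = (if j \<le> i \<and> i < j + m then \<mu> ! (i - j) else \<zero>)" for m
  proof (induction m)
    case 0 then show ?case by simp
  next
    case (Suc m)
    then obtain a as where e: "\<mu> = a # as" by (metis length_Suc_conv wfv_def)
    have eq: "[j..<j + Suc m] = j # [Suc j..<Suc j + m]" by (simp add: upt_conv_Cons del: upt_Suc)
    have IH: "dot R as (map (\<lambda>x. if x = i then \<one> else \<zero>) [Suc j..<Suc j + m]) =
       (if Suc j \<le> i \<and> i < Suc j + m then as ! (i - Suc j) else \<zero>)"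
      by (rule Suc.IH) (use Suc.prems e in simp)
    have ca: "a \<in> carrier R" using Suc.prems e by auto
    have cas: "as ! (i - Suc j) \<in> carrier R" if "Suc j \<le> i" "i < Suc j + m"
      using Suc.prems e that by (auto simp: wfv_def)
    have "dot R \<mu> (map (\<lambda>x. if x = i then \<one> else \<zero>) [j..<j+Suc m]) =
       (a \<otimes> (if j = i then \<one> else \<zero>)) \<oplus> (if Suc j \<le> i \<and> i < Suc j + m then as ! (i - Suc j) else \<zero>)"
      by (simp only: eq list.map dot.simps IH e)
    also have "\<dots> = (if j \<le> i \<and> i < j + Suc m then \<mu> ! (i - j) else \<zero>)"
    proof -
      consider "j = i" | "j < i" | "i < j" by linarith
      then show ?thesis
      proof cases
        case 1 then show ?thesis using ca e by simp
      next
        case 2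
        then have "i - j = Suc (i - Suc j)" by simp
        then have "\<mu> ! (i - j) = as ! (i - Suc j)" using e by simp
        then show ?thesis using 2 cas ca by auto
      next
        case 3 then show ?thesis using ca by auto
      qed
    qed
    finally show ?case .
  qed
  from this[of k \<mu> 0] show "wfv R k \<mu> \<Longrightarrow> i < k \<Longrightarrow> ?thesis" by (simp add: unitv_def)
qed

lemma lincomb_Nil[simp]: "lincomb R k cs [] = vzero R k" "lincomb R k [] S = vzero R k"
  by (simp_all add: lincomb_def)

lemma lincomb_Cons[simp]: "lincomb R k (c # cs) (e # S) = vadd R (vsmult R c e) (lincomb R k cs S)"
  by (simp add: lincomb_def)

lemma wfv_lincomb[intro]: "set cs \<subseteq> carrier R \<Longrightarrow> wfS R k S \<Longrightarrow> wfv R k (lincomb R k cs S)"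
proof (induction S arbitrary: cs)
  case Nil then show ?case by auto
next
  case (Cons e S) then show ?case
    by (cases cs) (auto simp: wfS_def)
qed

lemma dot_lincomb_zero: "wfv R k \<mu> \<Longrightarrow> wfS R k S \<Longrightarrow> set cs \<subseteq> carrier R \<Longrightarrow>
   (\<forall>s\<in>set S. dot R \<mu> s = \<zero>) \<Longrightarrow> dot R \<mu> (lincomb R k cs S) = \<zero>"
proof (induction S arbitrary: cs)
  case Nil then show ?case by (simp add: dot_vzero)
next
  case (Cons e S) then show ?case
    by (cases cs) (auto simp: wfS_def dot_vzero dot_vadd dot_vsmult wfv_lincomb wfv_vsmult)
qed

lemma knows_in_span: "wfv R k \<mu> \<Longrightarrow> wfS R k S \<Longrightarrow> in_span R k S v \<Longrightarrow> dot R \<mu> v \<noteq> \<zero> \<Longrightarrow> knows R \<mu> S"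
  unfolding in_span_def knows_def using dot_lincomb_zero by blast

lemma knows_store: "wfv R k \<mu> \<Longrightarrow> wfS R k S \<Longrightarrow> dot R \<mu> v \<noteq> \<zero> \<Longrightarrow> knows R \<mu> (store R k S v)"
  unfolding store_def using knows_in_span by (auto simp: knows_def)

lemma knows_store_mono: "knows R \<mu> S \<Longrightarrow> knows R \<mu> (store R k S v)"
  unfolding store_def knows_def by auto

lemma wfS_store: "wfS R k S \<Longrightarrow> wfv R k v \<Longrightarrow> wfS R k (store R k S v)"
  unfolding store_def wfS_def by auto

end

inductive_set spanS :: "nat ring \<Rightarrow> nat \<Rightarrow> nat list list \<Rightarrow> nat list set" for R k S where
  zero: "vzero R k \<in> spanS R k S"
| elem: "s \<in> set S \<Longrightarrow> s \<in> spanS R k S"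
| add: "u \<in> spanS R k S \<Longrightarrow> v \<in> spanS R k S \<Longrightarrow> vadd R u v \<in> spanS R k S"
| smult: "c \<in> carrier R \<Longrightarrow> u \<in> spanS R k S \<Longrightarrow> vsmult R c u \<in> spanS R k S"

context nfield
begin

lemma list_eqI_k: "length u = k \<Longrightarrow> length v = k \<Longrightarrow> (\<And>i. i < k \<Longrightarrow> u ! i = v ! i) \<Longrightarrow> u = v"
  by (auto intro: nth_equalityI)

lemma wfv_length: "wfv R k v \<Longrightarrow> length v = k"
  by (simp add: wfv_def)

lemma vsmult_zero: "wfv R k e \<Longrightarrow> vsmult R \<zero> e = vzero R k"
  by (rule list_eqI_k[of _ k]) (auto simp: wfv_length wfv_nth)

lemma vsmult_one: "wfv R k e \<Longrightarrow> vsmult R \<one> e = e"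
  by (rule list_eqI_k[of _ k]) (auto simp: wfv_length wfv_nth)

lemma vadd_zero_left: "wfv R k e \<Longrightarrow> vadd R (vzero R k) e = e"
  by (rule list_eqI_k[of _ k]) (auto simp: wfv_length wfv_nth)

lemma vadd_zero_right: "wfv R k e \<Longrightarrow> vadd R e (vzero R k) = e"
  by (rule list_eqI_k[of _ k]) (auto simp: wfv_length wfv_nth)

lemma vsmult_vzero: "c \<in> carrier R \<Longrightarrow> vsmult R c (vzero R k) = vzero R k"
  by (rule list_eqI_k[of _ k]) auto

lemma lincomb_zero: "wfS R k S \<Longrightarrow> lincomb R k (replicate (length S) \<zero>) S = vzero R k"
  by (induction S) (auto simp: wfS_def vsmult_zero vadd_zero_left wfv_vzero)

lemma in_span_zero: "wfS R k S \<Longrightarrow> in_span R k S (vzero R k)"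
  unfolding in_span_def
  by (rule exI[of _ "replicate (length S) \<zero>"]) (auto simp: lincomb_zero)

lemma in_span_elem: "wfS R k S \<Longrightarrow> s \<in> set S \<Longrightarrow> in_span R k S s"
proof (induction S)
  case Nil then show ?case by simp
next
  case (Cons e S)
  have we: "wfv R k e" and wS: "wfS R k S" using Cons.prems by (auto simp: wfS_def)
  show ?case
  proof (cases "s = e")
    case True
    have "lincomb R k (\<one> # replicate (length S) \<zero>) (e # S) = e"
      using we wS by (simp add: lincomb_zero vsmult_one vadd_zero_right)
    then show ?thesis unfolding in_span_def True
      by (intro exI[of _ "\<one> # replicate (length S) \<zero>"]) auto
  next
    case False
    then have "in_span R k S s" using Cons wS by auto
    then obtain cs where cs: "length cs = length S" "set cs \<subseteq> carrier R" "s = lincomb R k cs S"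
      unfolding in_span_def by blast
    have "lincomb R k (\<zero> # cs) (e # S) = s"
      using we wS cs by (simp add: vsmult_zero vadd_zero_left wfv_lincomb)
    then show ?thesis unfolding in_span_def
      using cs by (intro exI[of _ "\<zero> # cs"]) auto
  qed
qed

lemma lincomb_add: "wfS R k S \<Longrightarrow> length cs = length S \<Longrightarrow> length ds = length S \<Longrightarrow>
  set cs \<subseteq> carrier R \<Longrightarrow> set ds \<subseteq> carrier R \<Longrightarrow>
  lincomb R k (map2 (\<oplus>) cs ds) S = vadd R (lincomb R k cs S) (lincomb R k ds S)"
proof (induction S arbitrary: cs ds)
  case Nil then show ?case by (simp add: vadd_zero_left wfv_vzero)
next
  case (Cons e S)
  obtain c cs' where c: "cs = c # cs'" using Cons.prems by (cases cs) auto
  obtain d ds' where d: "ds = d # ds'" using Cons.prems by (cases ds) auto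
  have we: "wfv R k e" and wS: "wfS R k S" using Cons.prems by (auto simp: wfS_def)
  have cc: "c \<in> carrier R" "d \<in> carrier R" "set cs' \<subseteq> carrier R" "set ds' \<subseteq> carrier R"
    using Cons.prems c d by auto
  have IH: "lincomb R k (map2 (\<oplus>) cs' ds') S = vadd R (lincomb R k cs' S) (lincomb R k ds' S)"
    using Cons c d wS by auto
  have w1: "wfv R k (lincomb R k cs' S)" "wfv R k (lincomb R k ds' S)"
    using cc wS by auto
  show ?case
    unfolding c d
    apply (simp add: IH)
    apply (rule list_eqI_k[of _ k])
    using we w1 cc
    by (auto simp: wfv_length wfv_nth l_distr a_ac)
qed

lemma lincomb_smult: "wfS R k S \<Longrightarrow> length cs = length S \<Longrightarrow>
  set cs \<subseteq> carrier R \<Longrightarrow> c \<in> carrier R \<Longrightarrow>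
  lincomb R k (map ((\<otimes>) c) cs) S = vsmult R c (lincomb R k cs S)"
proof (induction S arbitrary: cs)
  case Nil then show ?case by (simp add: vsmult_vzero)
next
  case (Cons e S)
  obtain d cs' where d: "cs = d # cs'" using Cons.prems by (cases cs) auto
  have we: "wfv R k e" and wS: "wfS R k S" using Cons.prems by (auto simp: wfS_def)
  have cc: "d \<in> carrier R" "set cs' \<subseteq> carrier R"
    using Cons.prems d by auto
  have IH: "lincomb R k (map ((\<otimes>) c) cs') S = vsmult R c (lincomb R k cs' S)"
    using Cons d wS by auto
  have w1: "wfv R k (lincomb R k cs' S)" using cc wS by auto
  show ?case
    unfolding d
    apply (simp add: IH)
    apply (rule list_eqI_k[of _ k])
    using we w1 cc Cons.prems(4)
    by (auto simp: wfv_length wfv_nth r_distr m_ac)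
qed

lemma spanS_in_span: assumes wS: "wfS R k S" shows "v \<in> spanS R k S \<Longrightarrow> in_span R k S v"
proof (induction v rule: spanS.induct)
  case zero then show ?case using wS by (rule in_span_zero)
next
  case (elem s) then show ?case using wS by (simp add: in_span_elem)
next
  case (add u v)
  then obtain cs ds where "length cs = length S" "set cs \<subseteq> carrier R" "u = lincomb R k cs S"
    "length ds = length S" "set ds \<subseteq> carrier R" "v = lincomb R k ds S"
    unfolding in_span_def by auto
  then show ?case unfolding in_span_def
    using wS
    by (intro exI[of _ "map2 (\<oplus>) cs ds"]) (auto simp: lincomb_add set_zip intro!: add.m_closed nth_mem[THEN subsetD[rotated]])
next
  case (smult c u)
  then obtain cs where "length cs = length S" "set cs \<subseteq> carrier R" "u = lincomb R k cs S"
    unfolding in_span_def by auto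
  then show ?case unfolding in_span_def
    using smult wS
    by (intro exI[of _ "map ((\<otimes>) c) cs"]) (auto simp: lincomb_smult)
qed


lemma dot_vzero_left: "wfv R k t \<Longrightarrow> dot R (vzero R k) t = \<zero>"
proof (induction k arbitrary: t)
  case 0 then show ?case by simp
next
  case (Suc k)
  then obtain a as where "t = a # as" by (metis length_Suc_conv wfv_def)
  then show ?case using Suc by simp
qed

lemma wfv_SucE: assumes "wfv R (Suc k) v" obtains a as where "v = a # as" "a \<in> carrier R" "wfv R k as"
  using assms by (metis length_Suc_conv wfv_def wfv_Cons)

lemma duality:
  "wfS R k S \<Longrightarrow> (\<forall>\<mu>. wfv R k \<mu> \<and> \<mu> \<noteq> vzero R k \<longrightarrow> knows R \<mu> S) \<Longrightarrow> wfv R k v \<Longrightarrow> v \<in> spanS R k S"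
proof (induction k arbitrary: S v)
  case 0
  then have "v = vzero R 0" by (simp add: vzero_def)
  then show ?case using spanS.zero by metis
next
  case (Suc k)
  note wS = Suc.prems(1) and hyp = Suc.prems(2) and wv = Suc.prems(3)
  let ?m0 = "\<one> # vzero R k"
  have "wfv R (Suc k) ?m0" by auto
  moreover have "?m0 \<noteq> vzero R (Suc k)" by simp
  ultimately have "knows R ?m0 S" using hyp by blast
  then obtain s0 where s0: "s0 \<in> set S" "dot R ?m0 s0 \<noteq> \<zero>" unfolding knows_def by blast
  have ws0: "wfv R (Suc k) s0" using wS s0 by (auto simp: wfS_def)
  then obtain h t0 where ht: "s0 = h # t0" "h \<in> carrier R" "wfv R k t0" by (rule wfv_SucE)
  have "h \<noteq> \<zero>" using s0(2) ht by (simp add: dot_vzero_left)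
  then have hU: "h \<in> Units R" using field_Units ht by auto
  define ih where "ih = inv h"
  have ihc: "ih \<in> carrier R" and ih1: "ih \<otimes> h = \<one>" and ih2: "h \<otimes> ih = \<one>"
    using hU by (auto simp: ih_def)
  define T where "T = (\<lambda>s. vadd R (tl s) (vsmult R (\<ominus> (hd s \<otimes> ih)) t0))"
  define S' where "S' = map T S"
  have wT: "wfv R k (T s)" if "wfv R (Suc k) s" for s
    using that ht ihc by (elim wfv_SucE) (auto simp: T_def)
  have wS': "wfS R k S'" using wS wT by (auto simp: S'_def wfS_def)
  have hyp': "\<forall>\<mu>. wfv R k \<mu> \<and> \<mu> \<noteq> vzero R k \<longrightarrow> knows R \<mu> S'"
  proof (intro allI impI, elim conjE)
    fix \<mu>' assume w\<mu>': "wfv R k \<mu>'" and nz: "\<mu>' \<noteq> vzero R k"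
    define d0 where "d0 = dot R \<mu>' t0"
    have d0c: "d0 \<in> carrier R" using w\<mu>' ht by (auto simp: d0_def wfv_def)
    define t where "t = \<ominus> (d0 \<otimes> ih)"
    have tc: "t \<in> carrier R" using d0c ihc by (simp add: t_def)
    let ?\<mu> = "t # \<mu>'"
    have "wfv R (Suc k) ?\<mu>" using tc w\<mu>' by simp
    moreover have "?\<mu> \<noteq> vzero R (Suc k)" using nz by simp
    ultimately have "knows R ?\<mu> S" using hyp by blast
    then obtain s where s: "s \<in> set S" "dot R ?\<mu> s \<noteq> \<zero>" unfolding knows_def by blast
    have "wfv R (Suc k) s" using s wS by (auto simp: wfS_def)
    then obtain a as where as: "s = a # as" "a \<in> carrier R" "wfv R k as" by (rule wfv_SucE)
    have dc: "dot R \<mu>' as \<in> carrier R" using as w\<mu>' by (auto simp: wfv_def)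
    have "dot R \<mu>' (T s) = dot R \<mu>' as \<oplus> (\<ominus> (a \<otimes> ih)) \<otimes> d0"
    proof -
      have cc: "\<ominus> (a \<otimes> ih) \<in> carrier R" using as ihc by simp
      have "wfv R k (vsmult R (\<ominus> (a \<otimes> ih)) t0)" using cc ht by auto
      then show ?thesis
        using as ht w\<mu>' cc
        by (simp add: T_def dot_vadd[of k \<mu>' as] dot_vsmult[of _ k \<mu>' t0] d0_def)
    qed
    also have "\<dots> = t \<otimes> a \<oplus> dot R \<mu>' as"
      using as dc d0c ihc by (simp add: t_def l_minus r_minus m_ac a_comm)
    also have "\<dots> = dot R ?\<mu> s" using as by simp
    finally have "dot R \<mu>' (T s) \<noteq> \<zero>" using s by simp
    then show "knows R \<mu>' S'" using s unfolding knows_def S'_def by auto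
  qed
  have IH: "\<And>y. wfv R k y \<Longrightarrow> y \<in> spanS R k S'" using Suc.IH[OF wS' hyp'] .
  have Z: "\<zero> # y \<in> spanS R (Suc k) S" if "y \<in> spanS R k S'" for y
    using that
  proof (induction y rule: spanS.induct)
    case zero
    have "\<zero> # vzero R k = vzero R (Suc k)" by simp
    then show ?case using spanS.zero by metis
  next
    case (elem y)
    then obtain s where s: "s \<in> set S" "y = T s" by (auto simp: S'_def)
    have "wfv R (Suc k) s" using s wS by (auto simp: wfS_def)
    then obtain a as where as: "s = a # as" "a \<in> carrier R" "wfv R k as" by (rule wfv_SucE)
    have "a \<oplus> \<ominus> (a \<otimes> ih) \<otimes> h = \<zero>"
      using as ihc ht ih1 by (simp add: l_minus m_assoc r_neg)
    then have "vadd R s (vsmult R (\<ominus> (a \<otimes> ih)) s0) = \<zero> # y"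
      using s as ht by (simp add: T_def)
    moreover have "vadd R s (vsmult R (\<ominus> (a \<otimes> ih)) s0) \<in> spanS R (Suc k) S"
      using s s0 as ihc by (intro spanS.add spanS.elem spanS.smult) auto
    ultimately show ?case by simp
  next
    case (add u v)
    have "\<zero> # vadd R u v = vadd R (\<zero> # u) (\<zero> # v)" by simp
    then show ?case using add spanS.add by metis
  next
    case (smult c u)
    have "\<zero> # vsmult R c u = vsmult R c (\<zero> # u)" using smult by simp
    then show ?case using smult spanS.smult by metis
  qed
  obtain a vs where av: "v = a # vs" "a \<in> carrier R" "wfv R k vs" using wv by (rule wfv_SucE)
  define d where "d = a \<otimes> ih"
  have dc: "d \<in> carrier R" using av ihc by (simp add: d_def)
  define y where "y = vadd R vs (vsmult R (\<ominus> d) t0)"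
  have wy: "wfv R k y" using av ht dc by (auto simp: y_def)
  have "vadd R (vsmult R d s0) (\<zero> # y) = v"
  proof -
    have "d \<otimes> h \<oplus> \<zero> = a" using av ihc ht ih1 by (simp add: d_def m_assoc)
    moreover have "vadd R (vsmult R d t0) y = vs"
      apply (rule list_eqI_k[of _ k])
      using av ht dc wy
      by (auto simp: y_def wfv_length wfv_nth l_minus a_ac r_neg1 minus_eq r_neg)
    ultimately show ?thesis using ht av by simp
  qed
  moreover have "vadd R (vsmult R d s0) (\<zero> # y) \<in> spanS R (Suc k) S"
    using Z[OF IH[OF wy]] s0 dc spanS.elem[of s0 S R "Suc k"] by (intro spanS.add spanS.smult) auto
  ultimately show ?case by simp
qed

lemma duality_learned:
  assumes "wfS R k S" "\<forall>\<mu>. wfv R k \<mu> \<and> \<mu> \<noteq> vzero R k \<longrightarrow> knows R \<mu> S"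
  shows "learned_all R k S"
  unfolding learned_all_def
  using duality[OF assms] spanS_in_span[OF assms(1)] by auto

end

lemma integrable_pmf_bounded:
  fixes f :: "'a \<Rightarrow> real"
  assumes "\<And>x. x \<in> set_pmf p \<Longrightarrow> \<bar>f x\<bar> \<le> B"
  shows "integrable (measure_pmf p) f"
  by (rule measure_pmf.integrable_const_bound[where B=B]) (use assms in \<open>auto simp: AE_measure_pmf_iff\<close>)

lemma measure_bind_pmf_int:
  "measure_pmf.prob (bind_pmf p f) A = (\<integral>x. measure_pmf.prob (f x) A \<partial>measure_pmf p)"
proof -
  have int: "integrable (measure_pmf p) (\<lambda>x. measure_pmf.prob (f x) A)"
    by (rule integrable_pmf_bounded[where B=1]) auto
  have "ennreal (measure_pmf.prob (bind_pmf p f) A) = emeasure (bind_pmf p f) A"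
    by (simp add: measure_pmf.emeasure_eq_measure)
  also have "\<dots> = (\<integral>\<^sup>+x. emeasure (f x) A \<partial>measure_pmf p)" by simp
  also have "\<dots> = (\<integral>\<^sup>+x. ennreal (measure_pmf.prob (f x) A) \<partial>measure_pmf p)"
    by (simp add: measure_pmf.emeasure_eq_measure)
  also have "\<dots> = ennreal (\<integral>x. measure_pmf.prob (f x) A \<partial>measure_pmf p)"
    by (rule nn_integral_eq_integral[OF int]) auto
  finally show ?thesis
    by (subst (asm) ennreal_inj) (auto intro!: integral_nonneg_AE)
qed

lemma prob_bind_le:
  assumes "\<And>x. x \<in> set_pmf p \<Longrightarrow> measure_pmf.prob (f x) A \<le> c"
  shows "measure_pmf.prob (bind_pmf p f) A \<le> c"
proof -
  have "measure_pmf.prob (bind_pmf p f) A = (\<integral>x. measure_pmf.prob (f x) A \<partial>measure_pmf p)"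
    by (rule measure_bind_pmf_int)
  also have "\<dots> \<le> (\<integral>x. c \<partial>measure_pmf p)"
    using assms
    by (intro integral_mono_AE integrable_pmf_bounded[where B="1 + \<bar>c\<bar>"])
       (auto simp: AE_measure_pmf_iff intro: order_trans[OF measure_pmf.prob_le_1])
  finally show ?thesis by simp
qed

lemma prob_bind_ge:
  assumes "\<And>x. x \<in> set_pmf p \<Longrightarrow> measure_pmf.prob (f x) A \<ge> c"
  shows "measure_pmf.prob (bind_pmf p f) A \<ge> c"
proof -
  have "(\<integral>x. c \<partial>measure_pmf p) \<le> (\<integral>x. measure_pmf.prob (f x) A \<partial>measure_pmf p)"
    using assms
    by (intro integral_mono_AE integrable_pmf_bounded[where B="1 + \<bar>c\<bar>"])
       (auto simp: AE_measure_pmf_iff intro: order_trans[OF measure_pmf.prob_le_1])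
  also have "\<dots> = measure_pmf.prob (bind_pmf p f) A"
    by (rule measure_bind_pmf_int[symmetric])
  finally show ?thesis by simp
qed

lemma prob_bind_two:
  assumes "\<And>x. x \<in> set_pmf p \<Longrightarrow> Q x \<Longrightarrow> measure_pmf.prob (f x) A \<le> a"
    and "\<And>x. x \<in> set_pmf p \<Longrightarrow> measure_pmf.prob (f x) A \<le> b"
    and "a \<le> b" and "measure_pmf.prob p {x. Q x} \<ge> P"
  shows "measure_pmf.prob (bind_pmf p f) A \<le> P * a + (1 - P) * b"
proof -
  let ?g = "\<lambda>x. b + (a - b) * indicator {x. Q x} x"
  have "measure_pmf.prob (bind_pmf p f) A = (\<integral>x. measure_pmf.prob (f x) A \<partial>measure_pmf p)"
    by (rule measure_bind_pmf_int)
  also have "\<dots> \<le> (\<integral>x. ?g x \<partial>measure_pmf p)"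
    using assms(1,2)
    by (intro integral_mono_AE integrable_pmf_bounded[where B="1 + \<bar>a\<bar> + \<bar>b\<bar>"])
       (auto simp: AE_measure_pmf_iff split: split_indicator intro: order_trans[OF measure_pmf.prob_le_1])
  also have "\<dots> = (\<integral>x. b \<partial>measure_pmf p) + (\<integral>x. (a - b) * indicator {x. Q x} x \<partial>measure_pmf p)"
    by (rule Bochner_Integration.integral_add; rule integrable_pmf_bounded[where B="\<bar>a\<bar> + \<bar>b\<bar>"])
       (auto split: split_indicator)
  also have "\<dots> = b + (a - b) * measure_pmf.prob p {x. Q x}"
    by (simp add: integral_mult_right_zero)
  also have "\<dots> \<le> b + (a - b) * P"
    using assms(3,4) by (intro add_left_mono mult_left_mono_neg) auto
  also have "\<dots> = P * a + (1 - P) * b" by (simp add: algebra_simps)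
  finally show ?thesis .
qed


primrec run :: "('l \<Rightarrow> 'a \<Rightarrow> 'a pmf) \<Rightarrow> 'l list \<Rightarrow> 'a \<Rightarrow> 'a pmf" where
  "run g [] s = return_pmf s"
| "run g (v # vs) s = bind_pmf (g v s) (run g vs)"

fun good :: "('l \<Rightarrow> nat \<Rightarrow> bool) \<Rightarrow> nat \<Rightarrow> 'l list \<Rightarrow> nat \<Rightarrow> nat \<Rightarrow> bool" where
  "good H L \<sigma> j 0 = True"
| "good H L [] j (Suc m) = (L \<le> j)"
| "good H L (v # vs) j (Suc m) = (L \<le> j \<or> (if H v j then good H L vs (Suc j) (Suc m) \<and> good H L vs j m
                                               else good H L vs j (Suc m)))"

lemma good_mono_m: "good H L \<sigma> j (Suc m) \<Longrightarrow> good H L \<sigma> j m"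
proof (induction \<sigma> arbitrary: j m)
  case Nil then show ?case by (cases m) auto
next
  case (Cons v vs) then show ?case
    by (cases m) (auto split: if_splits)
qed

lemma good_mono_j: "good H L \<sigma> j m \<Longrightarrow> j \<le> j' \<Longrightarrow> good H L \<sigma> j' m"
proof (induction \<sigma> arbitrary: j j' m)
  case Nil then show ?case by (cases m) auto
next
  case (Cons v vs)
  show ?case
  proof (cases m)
    case 0 then show ?thesis by simp
  next
    case (Suc m')
    show ?thesis
    proof (cases "L \<le> j'")
      case True then show ?thesis using Suc by simp
    next
      case False
      then have nL: "\<not> L \<le> j" using Cons.prems by simp
      have g: "if H v j then good H L vs (Suc j) (Suc m') \<and> good H L vs j m' else good H L vs j (Suc m')"
        using Cons.prems nL Suc by simp
      show ?thesis
      proof (cases "H v j'")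
        case Hj': True
        show ?thesis
        proof (cases "H v j")
          case True
          then have "good H L vs (Suc j') (Suc m')" "good H L vs j' m'"
            using g Cons.IH Cons.prems(2) by auto
          then show ?thesis using Suc Hj' by simp
        next
          case False
          then have g1: "good H L vs j (Suc m')" using g by simp
          then have "good H L vs (Suc j') (Suc m')" using Cons.IH Cons.prems(2) by auto
          moreover have "good H L vs j' m'" using good_mono_m[OF g1] Cons.IH Cons.prems(2) by auto
          ultimately show ?thesis using Suc Hj' by simp
        qed
      next
        case Hj': False
        show ?thesis
        proof (cases "H v j")
          case True
          then have "j \<noteq> j'" using Hj' by auto
          then have "Suc j \<le> j'" using Cons.prems(2) by simp
          then have "good H L vs j' (Suc m')" using g True Cons.IH by auto
          then show ?thesis using Suc Hj' by simp
        next
          case False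
          then have "good H L vs j' (Suc m')" using g Cons.IH Cons.prems(2) by auto
          then show ?thesis using Suc Hj' by simp
        qed
      qed
    qed
  qed
qed

lemma run_inv:
  fixes \<phi> :: "'a \<Rightarrow> nat"
  assumes inv: "\<And>v s s'. I s \<Longrightarrow> s' \<in> set_pmf (g v s) \<Longrightarrow> I s' \<and> \<phi> s \<le> \<phi> s'"
  shows "I s \<Longrightarrow> s' \<in> set_pmf (run g \<sigma> s) \<Longrightarrow> I s' \<and> \<phi> s \<le> \<phi> s'"
proof (induction \<sigma> arbitrary: s)
  case Nil then show ?case by simp
next
  case (Cons v vs)
  then obtain t where t: "t \<in> set_pmf (g v s)" "s' \<in> set_pmf (run g vs t)" by auto
  with inv Cons.prems have "I t" "\<phi> s \<le> \<phi> t" by auto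
  with Cons.IH t show ?case by fastforce
qed

lemma chain_bound:
  fixes \<phi> :: "'a \<Rightarrow> nat" and a \<theta> \<epsilon> :: real
  assumes inv: "\<And>v s s'. I s \<Longrightarrow> s' \<in> set_pmf (g v s) \<Longrightarrow> I s' \<and> \<phi> s \<le> \<phi> s'"
    and adv: "\<And>v s. I s \<Longrightarrow> \<phi> s < L \<Longrightarrow> H v (\<phi> s) \<Longrightarrow>
                measure_pmf.prob (g v s) {s'. \<phi> s < \<phi> s'} \<ge> 1 - \<epsilon>"
    and a: "1 \<le> a" and th: "0 < \<theta>" "\<theta> \<le> 1" and e: "0 \<le> \<epsilon>" "\<epsilon> \<le> 1"
    and ineq: "(1 - \<epsilon>) / a + \<epsilon> / \<theta> \<le> 1"
  shows "I s \<Longrightarrow> good H L \<sigma> (\<phi> s) m \<Longrightarrow>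
     measure_pmf.prob (run g \<sigma> s) {s'. \<phi> s' < L} \<le> a ^ (L - \<phi> s) * \<theta> ^ m"
proof (induction \<sigma> arbitrary: s m)
  case Nil
  show ?case
  proof (cases m)
    case 0
    have "measure_pmf.prob (run g [] s) {s'. \<phi> s' < L} \<le> 1" by (rule measure_pmf.prob_le_1)
    also have "1 \<le> a ^ (L - \<phi> s) * \<theta> ^ m" using 0 a by simp
    finally show ?thesis .
  next
    case (Suc m') then show ?thesis using Nil th a by simp
  qed
next
  case (Cons v vs)
  have pos: "0 \<le> a ^ l * \<theta> ^ m" for l m using a th by simp
  show ?case
  proof (cases m)
    case 0
    have "measure_pmf.prob (run g (v # vs) s) {s'. \<phi> s' < L} \<le> 1" by (rule measure_pmf.prob_le_1)
    also have "1 \<le> a ^ (L - \<phi> s) * \<theta> ^ m" using 0 a by simp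
    finally show ?thesis .
  next
    case (Suc m')
    show ?thesis
    proof (cases "L \<le> \<phi> s")
      case True
      have "measure_pmf.prob (run g (v # vs) s) {s'. \<phi> s' < L} = 0"
        unfolding measure_pmf_zero_iff
        using run_inv[of I g \<phi>, OF inv Cons.prems(1), where \<sigma>="v # vs"] True by fastforce
      then show ?thesis using pos by simp
    next
      case nL: False
      have g: "if H v (\<phi> s) then good H L vs (Suc (\<phi> s)) (Suc m') \<and> good H L vs (\<phi> s) m'
               else good H L vs (\<phi> s) (Suc m')"
        using Cons.prems(2) nL Suc by simp
      have decr: "a ^ (L - y) \<le> a ^ (L - x)" if "x \<le> y" for x y
        using a that by (intro power_increasing) auto
      show ?thesis
      proof (cases "H v (\<phi> s)")
        case False
        then have g1: "good H L vs (\<phi> s) (Suc m')" using g by simp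
        show ?thesis unfolding run.simps Suc
        proof (rule prob_bind_le)
          fix t assume t: "t \<in> set_pmf (g v s)"
          then have It: "I t" and le: "\<phi> s \<le> \<phi> t" using inv Cons.prems(1) by auto
          have "measure_pmf.prob (run g vs t) {s'. \<phi> s' < L} \<le> a ^ (L - \<phi> t) * \<theta> ^ Suc m'"
            using Cons.IH[OF It] good_mono_j[OF g1 le] by blast
          also have "\<dots> \<le> a ^ (L - \<phi> s) * \<theta> ^ Suc m'"
            using decr[OF le] th by (intro mult_right_mono) auto
          finally show "measure_pmf.prob (run g vs t) {s'. \<phi> s' < L} \<le> a ^ (L - \<phi> s) * \<theta> ^ Suc m'" .
        qed
      next
        case True
        then have g1: "good H L vs (Suc (\<phi> s)) (Suc m')" and g2: "good H L vs (\<phi> s) m'" using g by auto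
        define l where "l = L - \<phi> s"
        have l: "L - Suc (\<phi> s) = l - 1" "l \<ge> 1" using nL by (auto simp: l_def)
        define A where "A = a ^ (l - 1) * \<theta> ^ Suc m'"
        define B where "B = a ^ l * \<theta> ^ m'"
        have AB: "A \<le> B"
        proof -
          have "A = a ^ (l - 1) * \<theta> * \<theta> ^ m'" by (simp add: A_def)
          also have "\<dots> \<le> a ^ (l - 1) * a * \<theta> ^ m'"
            using a th by (intro mult_right_mono mult_left_mono) auto
          also have "\<dots> = B" using l by (simp add: B_def power_Suc2[symmetric])
          finally show ?thesis .
        qed
        have "measure_pmf.prob (bind_pmf (g v s) (run g vs)) {s'. \<phi> s' < L}
              \<le> (1 - \<epsilon>) * A + (1 - (1 - \<epsilon>)) * B"
        proof (rule prob_bind_two[where Q="\<lambda>t. \<phi> s < \<phi> t"])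
          fix t assume t: "t \<in> set_pmf (g v s)" "\<phi> s < \<phi> t"
          then have It: "I t" using inv Cons.prems(1) by auto
          have "measure_pmf.prob (run g vs t) {s'. \<phi> s' < L} \<le> a ^ (L - \<phi> t) * \<theta> ^ Suc m'"
          proof -
            have "good H L vs (\<phi> t) (Suc m')" using good_mono_j[OF g1] t(2) by simp
            then show ?thesis using Cons.IH[OF It] by blast
          qed
          also have "\<dots> \<le> A"
            using decr[of "Suc (\<phi> s)" "\<phi> t"] t(2) th l by (auto simp: A_def intro!: mult_right_mono)
          finally show "measure_pmf.prob (run g vs t) {s'. \<phi> s' < L} \<le> A" .
        next
          fix t assume t: "t \<in> set_pmf (g v s)"
          then have It: "I t" and le: "\<phi> s \<le> \<phi> t" using inv Cons.prems(1) by auto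
          have "measure_pmf.prob (run g vs t) {s'. \<phi> s' < L} \<le> a ^ (L - \<phi> t) * \<theta> ^ m'"
            using Cons.IH[OF It] good_mono_j[OF g2 le] by blast
          also have "\<dots> \<le> B"
            using decr[OF le] th by (auto simp: B_def l_def intro!: mult_right_mono)
          finally show "measure_pmf.prob (run g vs t) {s'. \<phi> s' < L} \<le> B" .
        next
          show "A \<le> B" by (rule AB)
          show "1 - \<epsilon> \<le> measure_pmf.prob (g v s) {t. \<phi> s < \<phi> t}"
            using adv[OF Cons.prems(1)] nL True by simp
        qed
        also have "\<dots> = a ^ l * \<theta> ^ Suc m' * ((1 - \<epsilon>) / a + \<epsilon> / \<theta>)"
        proof -
          have "a ^ l = a ^ (l - 1) * a" using l by (simp add: power_Suc2[symmetric])
          then show ?thesis using a th by (simp add: A_def B_def field_simps)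
        qed
        also have "\<dots> \<le> a ^ l * \<theta> ^ Suc m'"
          using ineq pos[of l "Suc m'"] by (intro mult_left_le) auto
        finally show ?thesis by (simp add: Suc l_def)
      qed
    qed
  qed
qed


lemma measure_pmf_cong_set:
  assumes "\<And>x. x \<in> set_pmf p \<Longrightarrow> x \<in> A \<longleftrightarrow> x \<in> B"
  shows "measure_pmf.prob p A = measure_pmf.prob p B"
proof -
  have "A \<inter> set_pmf p = B \<inter> set_pmf p" using assms by auto
  then show ?thesis by (metis measure_Int_set_pmf)
qed

lemma measure_pmf_mono_set:
  assumes "\<And>x. x \<in> set_pmf p \<Longrightarrow> x \<in> A \<Longrightarrow> x \<in> B"
  shows "measure_pmf.prob p A \<le> measure_pmf.prob p B"
proof -
  have "measure_pmf.prob p A = measure_pmf.prob p (A \<inter> set_pmf p)" by (simp add: measure_Int_set_pmf)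
  also have "\<dots> \<le> measure_pmf.prob p B" using assms by (intro measure_pmf.finite_measure_mono) auto
  finally show ?thesis .
qed

locale ffield = nfield + assumes fin: "finite (carrier R)"

context ffield
begin

definition q :: real where "q = real (card (carrier R))"

lemma carrier_ne: "carrier R \<noteq> {}" using zero_closed by blast

lemma q_ge2: "q \<ge> 2"
proof -
  have "{\<zero>, \<one>} \<subseteq> carrier R" by auto
  then have "card {\<zero>, \<one>} \<le> card (carrier R)" using fin by (rule card_mono[rotated])
  then show ?thesis by (simp add: q_def)
qed

lemma set_rand_comb: "wfS R k S \<Longrightarrow> v \<in> set_pmf (rand_comb R k S) \<Longrightarrow> wfv R k v"
proof (induction S arbitrary: v)
  case Nil then show ?case by auto
next
  case (Cons e es)
  then obtain c w where "c \<in> carrier R" "w \<in> set_pmf (rand_comb R k es)" "v = vadd R (vsmult R c e) w"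
    using fin carrier_ne by auto
  then show ?case using Cons by (auto simp: wfS_def)
qed

lemma rand_comb_zero_prob:
  "wfS R k S \<Longrightarrow> wfv R k \<mu> \<Longrightarrow> knows R \<mu> S \<Longrightarrow>
     measure_pmf.prob (rand_comb R k S) {v. dot R \<mu> v = \<zero>} \<le> 1 / q"
proof (induction S)
  case Nil then show ?case by (simp add: knows_def)
next
  case (Cons e es)
  have we: "wfv R k e" and wes: "wfS R k es" using Cons.prems by (auto simp: wfS_def)
  define U where "U = pmf_of_set (carrier R)"
  have setU: "set_pmf U = carrier R" using fin carrier_ne by (simp add: U_def)
  define F where "F = (\<lambda>c v. vadd R (vsmult R c e) v)"
  have rc: "rand_comb R k (e # es) = bind_pmf U (\<lambda>c. bind_pmf (rand_comb R k es) (\<lambda>v. return_pmf (F c v)))"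
    by (simp add: U_def F_def)
  have dotF: "dot R \<mu> (F c v) = c \<otimes> dot R \<mu> e \<oplus> dot R \<mu> v" if "c \<in> carrier R" "wfv R k v" for c v
    using that we Cons.prems(2) by (simp add: F_def dot_vadd dot_vsmult wfv_vsmult)
  have dc: "dot R \<mu> v \<in> carrier R" if "wfv R k v" for v using that Cons.prems(2) by (auto simp: wfv_def)
  show ?case
  proof (cases "dot R \<mu> e = \<zero>")
    case True
    then have kes: "knows R \<mu> es" using Cons.prems(3) by (auto simp: knows_def)
    show ?thesis unfolding rc
    proof (rule prob_bind_le)
      fix c assume c: "c \<in> set_pmf U"
      have "measure_pmf.prob (bind_pmf (rand_comb R k es) (\<lambda>v. return_pmf (F c v))) {v. dot R \<mu> v = \<zero>}
          = measure_pmf.prob (rand_comb R k es) ((\<lambda>v. F c v) -` {v. dot R \<mu> v = \<zero>})"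
        by (simp add: map_pmf_def[symmetric])
      also have "\<dots> = measure_pmf.prob (rand_comb R k es) {v. dot R \<mu> v = \<zero>}"
      proof (rule measure_pmf_cong_set)
        fix v assume "v \<in> set_pmf (rand_comb R k es)"
        then have "wfv R k v" using set_rand_comb wes by blast
        then show "(v \<in> (\<lambda>v. F c v) -` {v. dot R \<mu> v = \<zero>}) = (v \<in> {v. dot R \<mu> v = \<zero>})"
          using c setU dotF True dc by auto
      qed
      also have "\<dots> \<le> 1 / q" using Cons.IH[OF wes Cons.prems(2) kes] .
      finally show "measure_pmf.prob (bind_pmf (rand_comb R k es) (\<lambda>v. return_pmf (F c v))) {v. dot R \<mu> v = \<zero>} \<le> 1 / q" .
    qed
  next
    case False
    have de: "dot R \<mu> e \<in> carrier R" using we dc by blast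
    have "rand_comb R k (e # es) = bind_pmf (rand_comb R k es) (\<lambda>v. bind_pmf U (\<lambda>c. return_pmf (F c v)))"
      unfolding rc by (rule bind_commute_pmf)
    also have "measure_pmf.prob \<dots> {v. dot R \<mu> v = \<zero>} \<le> 1 / q"
    proof (rule prob_bind_le)
      fix v assume v: "v \<in> set_pmf (rand_comb R k es)"
      then have wv: "wfv R k v" using set_rand_comb wes by blast
      have "measure_pmf.prob (bind_pmf U (\<lambda>c. return_pmf (F c v))) {v. dot R \<mu> v = \<zero>}
          = measure_pmf.prob U ((\<lambda>c. F c v) -` {v. dot R \<mu> v = \<zero>})"
        by (simp add: map_pmf_def[symmetric])
      also have "\<dots> = real (card (carrier R \<inter> ((\<lambda>c. F c v) -` {v. dot R \<mu> v = \<zero>}))) / q"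
        using fin carrier_ne by (simp add: U_def measure_pmf_of_set q_def)
      also have "\<dots> \<le> 1 / q"
      proof -
        have U: "dot R \<mu> e \<in> Units R" using False de field_Units by auto
        have "carrier R \<inter> ((\<lambda>c. F c v) -` {v. dot R \<mu> v = \<zero>}) \<subseteq> {\<ominus> (dot R \<mu> v) \<otimes> inv (dot R \<mu> e)}"
        proof
          fix c assume "c \<in> carrier R \<inter> ((\<lambda>c. F c v) -` {v. dot R \<mu> v = \<zero>})"
          then have c: "c \<in> carrier R" "c \<otimes> dot R \<mu> e \<oplus> dot R \<mu> v = \<zero>" using dotF wv by auto
          have dv: "dot R \<mu> v \<in> carrier R" using dc wv by blast
          have "c \<otimes> dot R \<mu> e = \<ominus> (dot R \<mu> v)"
            using minus_equality[of "c \<otimes> dot R \<mu> e" "dot R \<mu> v"] c dv de by simp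
          then have "c \<otimes> dot R \<mu> e \<otimes> inv (dot R \<mu> e) = \<ominus> (dot R \<mu> v) \<otimes> inv (dot R \<mu> e)" by simp
          then show "c \<in> {\<ominus> (dot R \<mu> v) \<otimes> inv (dot R \<mu> e)}"
            using c U de by (simp add: m_assoc)
        qed
        note sub = this
        have "card (carrier R \<inter> ((\<lambda>c. F c v) -` {v. dot R \<mu> v = \<zero>})) \<le> 1"
          using card_mono[OF _ sub] by simp
        then show ?thesis using q_ge2 by (intro divide_right_mono) auto
      qed
      finally show "measure_pmf.prob (bind_pmf U (\<lambda>c. return_pmf (F c v))) {v. dot R \<mu> v = \<zero>} \<le> 1 / q" .
    qed
    finally show ?thesis .
  qed
qed

lemma rand_comb_nz_prob:
  assumes "wfS R k S" "wfv R k \<mu>" "knows R \<mu> S"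
  shows "measure_pmf.prob (rand_comb R k S) {v. dot R \<mu> v \<noteq> \<zero>} \<ge> 1 - 1 / q"
proof -
  have "measure_pmf.prob (rand_comb R k S) {v. dot R \<mu> v \<noteq> \<zero>} =
        1 - measure_pmf.prob (rand_comb R k S) {v. dot R \<mu> v = \<zero>}"
    using measure_pmf.prob_compl[of "{v. dot R \<mu> v = \<zero>}" "rand_comb R k S"]
    by (simp add: Compl_eq_Diff_UNIV[symmetric] Collect_neg_eq)
  then show ?thesis using rand_comb_zero_prob[OF assms] by simp
qed

end

definition wfst :: "nat ring \<Rightarrow> nat \<Rightarrow> gstate \<Rightarrow> bool" where
  "wfst R k st \<longleftrightarrow> (\<forall>w. wfS R k (st w))"

lemma set_pmf_seq: "xs \<in> set_pmf (pmf_seq ps) \<Longrightarrow> length xs = length ps \<and> (\<forall>i<length ps. xs ! i \<in> set_pmf (ps ! i))"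
proof (induction ps arbitrary: xs)
  case Nil then show ?case by simp
next
  case (Cons p ps)
  then obtain x ys where "x \<in> set_pmf p" "ys \<in> set_pmf (pmf_seq ps)" "xs = x # ys" by auto
  then show ?case using Cons.IH by (auto simp: nth_Cons split: nat.splits)
qed

lemma map_pmf_seq_nth: "i < length ps \<Longrightarrow> map_pmf (\<lambda>xs. xs ! i) (pmf_seq ps) = ps ! i"
proof (induction ps arbitrary: i)
  case Nil then show ?case by simp
next
  case (Cons p ps)
  show ?case
  proof (cases i)
    case 0
    have "map_pmf (\<lambda>xs. xs ! i) (pmf_seq (p # ps)) = bind_pmf p (\<lambda>x. bind_pmf (pmf_seq ps) (\<lambda>_. return_pmf x))"
      by (simp add: 0 map_bind_pmf bind_return_pmf map_pmf_def bind_assoc_pmf)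
    also have "\<dots> = p" by (simp add: bind_return_pmf')
    finally show ?thesis using 0 by simp
  next
    case (Suc j)
    then have j: "j < length ps" using Cons.prems by simp
    have "map_pmf (\<lambda>xs. xs ! i) (pmf_seq (p # ps)) = bind_pmf p (\<lambda>x. map_pmf (\<lambda>xs. xs ! j) (pmf_seq ps))"
      by (simp add: Suc map_bind_pmf bind_return_pmf map_pmf_def bind_assoc_pmf)
    also have "\<dots> = ps ! j" using Cons.IH[OF j] by simp
    finally show ?thesis using Suc by simp
  qed
qed

context ffield
begin

lemma fold_store_wf: "wfS R k S \<Longrightarrow> \<forall>e\<in>set es. wfv R k e \<Longrightarrow> wfS R k (fold (\<lambda>e S. store R k S e) es S)"
  by (induction es arbitrary: S) (auto simp: wfS_store)

lemma fold_store_mono: "knows R \<mu> S \<Longrightarrow> knows R \<mu> (fold (\<lambda>e S. store R k S e) es S)"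
  by (induction es arbitrary: S) (auto simp: knows_store_mono)

lemma fold_store_knows: "wfS R k S \<Longrightarrow> wfv R k \<mu> \<Longrightarrow> \<forall>e\<in>set es. wfv R k e \<Longrightarrow> e \<in> set es \<Longrightarrow>
   dot R \<mu> e \<noteq> \<zero> \<Longrightarrow> knows R \<mu> (fold (\<lambda>e S. store R k S e) es S)"
proof (induction es arbitrary: S)
  case Nil then show ?case by simp
next
  case (Cons x xs)
  show ?case
  proof (cases "e = x")
    case True
    then have "knows R \<mu> (store R k S x)" using Cons.prems knows_store by auto
    then show ?thesis using fold_store_mono by simp
  next
    case False
    then show ?thesis using Cons by (auto simp: wfS_store)
  qed
qed

definition sync_G :: "nat \<Rightarrow> nat \<Rightarrow> nat \<Rightarrow> (nat \<Rightarrow> nat) \<Rightarrow> gstate \<Rightarrow> (nat list \<times> nat list) list \<Rightarrow> nat \<Rightarrow> nat list list" where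
  "sync_G k n r par st msgs = (\<lambda>w. if w < n then
          fold (\<lambda>e S. store R k S e)
            ([fst (msgs ! v). v \<leftarrow> [0..<n], v \<noteq> r, par v = w]
             @ (if w \<noteq> r then [snd (msgs ! w)] else []))
            (st w)
        else st w)"

lemma sync_step_eq: "sync_step R k n r par st =
   map_pmf (sync_G k n r par st) (pmf_seq (map (\<lambda>v. pair_pmf (rand_comb R k (st v)) (rand_comb R k (st (par v)))) [0..<n]))"
  by (simp add: sync_step_def sync_G_def map_pmf_def)

lemma sync_msgs_wf:
  assumes "wfst R k st" "msgs \<in> set_pmf (pmf_seq (map (\<lambda>v. pair_pmf (rand_comb R k (st v)) (rand_comb R k (st (par v)))) [0..<n]))"
  shows "length msgs = n" "\<And>v. v < n \<Longrightarrow> wfv R k (fst (msgs ! v)) \<and> wfv R k (snd (msgs ! v))"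
proof -
  note s = set_pmf_seq[OF assms(2)]
  show "length msgs = n" using s by simp
  fix v assume "v < n"
  then have "msgs ! v \<in> set_pmf (pair_pmf (rand_comb R k (st v)) (rand_comb R k (st (par v))))"
    using s by simp
  then show "wfv R k (fst (msgs ! v)) \<and> wfv R k (snd (msgs ! v))"
    using assms(1) set_rand_comb[of k "st v"] set_rand_comb[of k "st (par v)"] by (auto simp: wfst_def set_pair_pmf)
qed

lemma sync_support:
  assumes "wfst R k st" "st' \<in> set_pmf (sync_step R k n r par st)"
  shows "wfst R k st'" "\<And>w. knows R \<mu> (st w) \<Longrightarrow> knows R \<mu> (st' w)"
proof -
  obtain msgs where m: "msgs \<in> set_pmf (pmf_seq (map (\<lambda>v. pair_pmf (rand_comb R k (st v)) (rand_comb R k (st (par v)))) [0..<n]))"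
    and st': "st' = sync_G k n r par st msgs"
    using assms(2) by (auto simp: sync_step_eq)
  note mw = sync_msgs_wf[OF assms(1) m]
  show "wfst R k st'"
    unfolding wfst_def st' sync_G_def
    using assms(1) mw by (auto simp: wfst_def intro!: fold_store_wf wfS_store)
  fix w assume "knows R \<mu> (st w)"
  then show "knows R \<mu> (st' w)" unfolding st' sync_G_def by (auto intro!: fold_store_mono knows_store_mono)
qed

lemma sync_transfer:
  assumes wst: "wfst R k st" and w\<mu>: "wfv R k \<mu>" and w: "w < n"
    and src: "(src < n \<and> src \<noteq> r \<and> par src = w) \<or> (w \<noteq> r \<and> src = par w)"
    and kn: "knows R \<mu> (st src)"
  shows "measure_pmf.prob (sync_step R k n r par st) {st'. knows R \<mu> (st' w)} \<ge> 1 - 1 / q"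
proof -
  define ps where "ps = map (\<lambda>v. pair_pmf (rand_comb R k (st v)) (rand_comb R k (st (par v)))) [0..<n]"
  define sel where "sel = (\<lambda>msgs :: (nat list \<times> nat list) list. if src < n \<and> src \<noteq> r \<and> par src = w then fst (msgs ! src) else snd (msgs ! w))"
  have msel: "map_pmf sel (pmf_seq ps) = rand_comb R k (st src)"
  proof (cases "src < n \<and> src \<noteq> r \<and> par src = w")
    case True
    have "map_pmf sel (pmf_seq ps) = map_pmf fst (map_pmf (\<lambda>xs. xs ! src) (pmf_seq ps))"
      by (simp add: sel_def True pmf.map_comp o_def)
    also have "\<dots> = rand_comb R k (st src)" using True by (simp add: map_pmf_seq_nth ps_def map_fst_pair_pmf)
    finally show ?thesis .
  next
    case False
    then have F: "w \<noteq> r" "src = par w" using src by auto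
    have "map_pmf sel (pmf_seq ps) = map_pmf snd (map_pmf (\<lambda>xs. xs ! w) (pmf_seq ps))"
      by (simp add: sel_def False pmf.map_comp o_def)
    also have "\<dots> = rand_comb R k (st src)" using w F by (simp add: map_pmf_seq_nth ps_def map_snd_pair_pmf)
    finally show ?thesis .
  qed
  have "1 - 1 / q \<le> measure_pmf.prob (rand_comb R k (st src)) {x. dot R \<mu> x \<noteq> \<zero>}"
    using rand_comb_nz_prob wst w\<mu> kn by (auto simp: wfst_def)
  also have "\<dots> = measure_pmf.prob (pmf_seq ps) {msgs. dot R \<mu> (sel msgs) \<noteq> \<zero>}"
    by (simp add: msel[symmetric])
  also have "\<dots> \<le> measure_pmf.prob (pmf_seq ps) (sync_G k n r par st -` {st'. knows R \<mu> (st' w)})"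
  proof (rule measure_pmf_mono_set)
    fix msgs assume m: "msgs \<in> set_pmf (pmf_seq ps)" and d: "msgs \<in> {msgs. dot R \<mu> (sel msgs) \<noteq> \<zero>}"
    note mw = sync_msgs_wf[OF wst m[unfolded ps_def]]
    let ?L = "[fst (msgs ! v). v \<leftarrow> [0..<n], v \<noteq> r, par v = w] @ (if w \<noteq> r then [snd (msgs ! w)] else [])"
    have Lw: "\<forall>e\<in>set ?L. wfv R k e" using mw w by auto
    have "sel msgs \<in> set ?L" using src w by (auto simp: sel_def)
    then have "knows R \<mu> (fold (\<lambda>e S. store R k S e) ?L (st w))"
      using fold_store_knows[OF _ w\<mu> Lw] wst d by (auto simp: wfst_def)
    then show "msgs \<in> sync_G k n r par st -` {st'. knows R \<mu> (st' w)}"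
      using w by (simp add: sync_G_def)
  qed
  also have "\<dots> = measure_pmf.prob (sync_step R k n r par st) {st'. knows R \<mu> (st' w)}"
    by (simp add: sync_step_eq ps_def)
  finally show ?thesis .
qed


lemma exchange_support:
  assumes "wfst R k st" "st' \<in> set_pmf (exchange R k u p st)"
  shows "wfst R k st'" "\<And>w. knows R \<mu> (st w) \<Longrightarrow> knows R \<mu> (st' w)"
proof -
  obtain a b where ab: "a \<in> set_pmf (rand_comb R k (st u))" "b \<in> set_pmf (rand_comb R k (st p))"
    "st' = st(p := store R k (st p) a, u := store R k (st u) b)"
    using assms(2) by (auto simp: exchange_def)
  have "wfv R k a" "wfv R k b" using ab(1,2) assms(1) set_rand_comb by (auto simp: wfst_def)
  then show "wfst R k st'" using assms(1) ab(3) by (auto simp: wfst_def wfS_store)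
  fix w assume "knows R \<mu> (st w)"
  then show "knows R \<mu> (st' w)" using ab(3) by (auto simp: knows_store_mono)
qed

lemma exchange_transfer_u:
  assumes wst: "wfst R k st" and w\<mu>: "wfv R k \<mu>" and kn: "knows R \<mu> (st p)"
  shows "measure_pmf.prob (exchange R k u p st) {st'. knows R \<mu> (st' u)} \<ge> 1 - 1 / q"
  unfolding exchange_def
proof (rule prob_bind_ge)
  fix a assume a: "a \<in> set_pmf (rand_comb R k (st u))"
  let ?F = "\<lambda>b. st(p := store R k (st p) a, u := store R k (st u) b)"
  have "1 - 1 / q \<le> measure_pmf.prob (rand_comb R k (st p)) {b. dot R \<mu> b \<noteq> \<zero>}"
    using rand_comb_nz_prob wst w\<mu> kn by (auto simp: wfst_def)
  also have "\<dots> \<le> measure_pmf.prob (rand_comb R k (st p)) (?F -` {st'. knows R \<mu> (st' u)})"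
  proof (rule measure_pmf_mono_set)
    fix b assume "b \<in> set_pmf (rand_comb R k (st p))" "b \<in> {b. dot R \<mu> b \<noteq> \<zero>}"
    then show "b \<in> ?F -` {st'. knows R \<mu> (st' u)}"
      using knows_store[OF w\<mu>] wst by (auto simp: wfst_def)
  qed
  also have "\<dots> = measure_pmf.prob (bind_pmf (rand_comb R k (st p)) (\<lambda>b. return_pmf (?F b))) {st'. knows R \<mu> (st' u)}"
    by (simp add: map_pmf_def[symmetric])
  finally show "1 - 1 / q \<le> measure_pmf.prob (bind_pmf (rand_comb R k (st p)) (\<lambda>b. return_pmf (?F b))) {st'. knows R \<mu> (st' u)}" .
qed

lemma exchange_transfer_p:
  assumes wst: "wfst R k st" and w\<mu>: "wfv R k \<mu>" and kn: "knows R \<mu> (st u)" and up: "u \<noteq> p"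
  shows "measure_pmf.prob (exchange R k u p st) {st'. knows R \<mu> (st' p)} \<ge> 1 - 1 / q"
proof -
  have e: "exchange R k u p st = bind_pmf (rand_comb R k (st p)) (\<lambda>b. bind_pmf (rand_comb R k (st u)) (\<lambda>a.
     return_pmf (st(p := store R k (st p) a, u := store R k (st u) b))))"
    unfolding exchange_def by (rule bind_commute_pmf)
  show ?thesis unfolding e
  proof (rule prob_bind_ge)
    fix b assume b: "b \<in> set_pmf (rand_comb R k (st p))"
    let ?F = "\<lambda>a. st(p := store R k (st p) a, u := store R k (st u) b)"
    have "1 - 1 / q \<le> measure_pmf.prob (rand_comb R k (st u)) {a. dot R \<mu> a \<noteq> \<zero>}"
      using rand_comb_nz_prob wst w\<mu> kn by (auto simp: wfst_def)
    also have "\<dots> \<le> measure_pmf.prob (rand_comb R k (st u)) (?F -` {st'. knows R \<mu> (st' p)})"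
    proof (rule measure_pmf_mono_set)
      fix a assume "a \<in> set_pmf (rand_comb R k (st u))" "a \<in> {a. dot R \<mu> a \<noteq> \<zero>}"
      then show "a \<in> ?F -` {st'. knows R \<mu> (st' p)}"
        using knows_store[OF w\<mu>] wst up by (auto simp: wfst_def)
    qed
    also have "\<dots> = measure_pmf.prob (bind_pmf (rand_comb R k (st u)) (\<lambda>a. return_pmf (?F a))) {st'. knows R \<mu> (st' p)}"
      by (simp add: map_pmf_def[symmetric])
    finally show "1 - 1 / q \<le> measure_pmf.prob (bind_pmf (rand_comb R k (st u)) (\<lambda>a. return_pmf (?F a))) {st'. knows R \<mu> (st' p)}" .
  qed
qed

end

locale gtree = ffield R for R :: "nat ring" (structure) +
  fixes n r :: nat and par :: "nat \<Rightarrow> nat"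
  assumes tree: "is_rooted_tree n r par"
begin

lemma r_lt: "r < n" using tree by (simp add: is_rooted_tree_def)

lemma par_lt: "v < n \<Longrightarrow> v \<noteq> r \<Longrightarrow> par v < n" using tree by (simp add: is_rooted_tree_def)

lemma reach: "v < n \<Longrightarrow> \<exists>m. (par ^^ m) v = r" using tree by (simp add: is_rooted_tree_def)

abbreviation dep :: "nat \<Rightarrow> nat" where "dep v \<equiv> depth par r v"

lemma depth_reach: "v < n \<Longrightarrow> (par ^^ dep v) v = r"
  unfolding depth_def using reach by (rule LeastI_ex)

lemma depth_min: "i < dep v \<Longrightarrow> (par ^^ i) v \<noteq> r"
  unfolding depth_def using not_less_Least by blast

lemma anc_lt: "v < n \<Longrightarrow> i \<le> dep v \<Longrightarrow> (par ^^ i) v < n"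
proof (induction i)
  case 0 then show ?case by simp
next
  case (Suc i)
  then have "(par ^^ i) v < n" "(par ^^ i) v \<noteq> r" using depth_min by auto
  then show ?case using par_lt by simp
qed

lemma depth_le_lmax: "v < n \<Longrightarrow> dep v \<le> lmax n r par"
  unfolding lmax_def by (rule Max_ge) auto

lemma par_neq: "v < n \<Longrightarrow> v \<noteq> r \<Longrightarrow> par v \<noteq> v"
proof
  assume v: "v < n" "v \<noteq> r" "par v = v"
  then have "(par ^^ m) v = v" for m by (induction m) auto
  then show False using reach[OF v(1)] v(2) by auto
qed

text \<open>Path from s up to the root and down to w.\<close>
definition pth :: "nat \<Rightarrow> nat \<Rightarrow> nat \<Rightarrow> nat" where
  "pth s w j = (if j \<le> dep s then (par ^^ j) s else (par ^^ (dep s + dep w - j)) w)"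

definition plen :: "nat \<Rightarrow> nat \<Rightarrow> nat" where "plen s w = dep s + dep w"

definition child :: "nat \<Rightarrow> nat \<Rightarrow> nat \<Rightarrow> nat" where
  "child s w j = (if j < dep s then pth s w j else pth s w (Suc j))"

lemma pth_0: "pth s w 0 = s" by (simp add: pth_def)

lemma pth_L: "s < n \<Longrightarrow> w < n \<Longrightarrow> pth s w (plen s w) = w"
proof (cases "dep w = 0")
  case True
  assume s: "s < n" and w: "w < n"
  have "w = r" using depth_reach[OF w] True by simp
  moreover have "(par ^^ dep s) s = r" using depth_reach s by simp
  ultimately show ?thesis using True by (simp add: pth_def plen_def)
next
  case False
  then show ?thesis by (simp add: pth_def plen_def)
qed

lemma pth_lt: "s < n \<Longrightarrow> w < n \<Longrightarrow> j \<le> plen s w \<Longrightarrow> pth s w j < n"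
  by (auto simp: pth_def plen_def intro!: anc_lt)

lemma plen_le: "s < n \<Longrightarrow> w < n \<Longrightarrow> plen s w \<le> 2 * lmax n r par"
  using depth_le_lmax[of s] depth_le_lmax[of w] by (simp add: plen_def)

lemma edge:
  assumes s: "s < n" and w: "w < n" and j: "j < plen s w"
  shows "(child s w j \<noteq> r \<and> child s w j = pth s w j \<and> par (child s w j) = pth s w (Suc j)) \<or>
         (child s w j \<noteq> r \<and> child s w j = pth s w (Suc j) \<and> par (child s w j) = pth s w j)"
proof (cases "j < dep s")
  case True
  then have "child s w j = (par ^^ j) s" "pth s w (Suc j) = par ((par ^^ j) s)" "pth s w j = (par ^^ j) s"
    by (auto simp: child_def pth_def)
  moreover have "(par ^^ j) s \<noteq> r" using depth_min True by blast
  ultimately show ?thesis by simp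
next
  case False
  define i where "i = dep s + dep w - Suc j"
  have i: "i < dep w" "dep s + dep w - j = Suc i" using j False by (auto simp: i_def plen_def)
  have "pth s w (Suc j) = (par ^^ i) w" using False by (simp add: pth_def i_def)
  moreover have "pth s w j = par ((par ^^ i) w)"
  proof (cases "j = dep s")
    case True
    have "pth s w j = r" using True depth_reach[OF s] by (simp add: pth_def)
    moreover have "Suc i = dep w" using i True by simp
    then have "par ((par ^^ i) w) = r" using depth_reach[OF w] by (metis comp_apply funpow.simps(2))
    ultimately show ?thesis by simp
  next
    case False2: False
    then have "pth s w j = (par ^^ Suc i) w" using False i by (simp add: pth_def)
    then show ?thesis by simp
  qed
  moreover have "child s w j = pth s w (Suc j)" using False by (simp add: child_def)
  moreover have "(par ^^ i) w \<noteq> r" using depth_min i by blast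
  ultimately show ?thesis by simp
qed

end

lemma pmf_iter_front: "pmf_iter f (Suc t) s = bind_pmf (f s) (pmf_iter f t)"
proof (induction t arbitrary: s)
  case 0 then show ?case by (simp add: bind_return_pmf bind_return_pmf')
next
  case (Suc t)
  have "pmf_iter f (Suc (Suc t)) s = bind_pmf (pmf_iter f (Suc t) s) f" by (simp only: pmf_iter.simps)
  also have "\<dots> = bind_pmf (bind_pmf (f s) (pmf_iter f t)) f" by (simp only: Suc)
  also have "\<dots> = bind_pmf (f s) (\<lambda>x. bind_pmf (pmf_iter f t x) f)" by (rule bind_assoc_pmf)
  also have "\<dots> = bind_pmf (f s) (pmf_iter f (Suc t))" by (rule arg_cong[where f="bind_pmf (f s)"]) (simp add: fun_eq_iff)
  finally show ?case .
qed

lemma pmf_iter_run: "pmf_iter f T s = run (\<lambda>_. f) (replicate T ()) s"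
proof (induction T arbitrary: s)
  case 0 then show ?case by simp
next
  case (Suc T)
  have "pmf_iter f T = run (\<lambda>_. f) (replicate T ())" using Suc.IH by (simp add: fun_eq_iff)
  then show ?case by (simp only: pmf_iter_front replicate_Suc run.simps)
qed

lemma good_replicate: "L + m \<le> T + j \<Longrightarrow> good (\<lambda>_ _. True) L (replicate T ()) j m"
proof (induction T arbitrary: j m)
  case 0 then show ?case by (cases m) auto
next
  case (Suc T) then show ?case by (cases m) auto
qed

context gtree
begin

definition phi :: "nat list \<Rightarrow> nat \<Rightarrow> nat \<Rightarrow> gstate \<Rightarrow> nat" where
  "phi \<mu> s w st = Max {j. j \<le> plen s w \<and> knows R \<mu> (st (pth s w j))}"

definition Inv :: "nat \<Rightarrow> nat list \<Rightarrow> nat \<Rightarrow> gstate \<Rightarrow> bool" where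
  "Inv k \<mu> s st \<longleftrightarrow> wfst R k st \<and> knows R \<mu> (st s)"

lemma phi_set: "finite {j. j \<le> plen s w \<and> knows R \<mu> (st (pth s w j))}" by simp

lemma phi_ge: "j \<le> plen s w \<Longrightarrow> knows R \<mu> (st (pth s w j)) \<Longrightarrow> j \<le> phi \<mu> s w st"
  unfolding phi_def by (rule Max_ge) auto

lemma phi_props:
  assumes "knows R \<mu> (st s)"
  shows "phi \<mu> s w st \<le> plen s w" "knows R \<mu> (st (pth s w (phi \<mu> s w st)))"
proof -
  have ne: "0 \<in> {j. j \<le> plen s w \<and> knows R \<mu> (st (pth s w j))}" using assms by (simp add: pth_0)
  have "phi \<mu> s w st \<in> {j. j \<le> plen s w \<and> knows R \<mu> (st (pth s w j))}"
    unfolding phi_def using ne by (intro Max_in) auto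
  then show "phi \<mu> s w st \<le> plen s w" "knows R \<mu> (st (pth s w (phi \<mu> s w st)))" by auto
qed

lemma phi_mono:
  assumes "knows R \<mu> (st s)" "\<And>v. knows R \<mu> (st v) \<Longrightarrow> knows R \<mu> (st' v)"
  shows "phi \<mu> s w st \<le> phi \<mu> s w st'"
  using phi_props[of \<mu> st s w, OF assms(1)] assms(2) by (intro phi_ge) auto

lemma phi_notknow:
  assumes "s < n" "w < n" "knows R \<mu> (st s)" "\<not> knows R \<mu> (st w)"
  shows "phi \<mu> s w st < plen s w"
proof -
  have "phi \<mu> s w st \<noteq> plen s w" using phi_props[of \<mu> st s w, OF assms(3)] pth_L[OF assms(1,2)] assms(4) by auto
  then show ?thesis using phi_props[of \<mu> st s w, OF assms(3)] by simp
qed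

lemma kernel_adv:
  assumes sup: "\<And>st'. st' \<in> set_pmf K \<Longrightarrow> knows R \<mu> (st' (pth s w (Suc (phi \<mu> s w st)))) \<Longrightarrow>
                     knows R \<mu> (st' s) \<Longrightarrow> Suc (phi \<mu> s w st) \<le> phi \<mu> s w st'"
    and tr: "measure_pmf.prob K {st'. knows R \<mu> (st' (pth s w (Suc (phi \<mu> s w st))))} \<ge> 1 - 1 / q"
    and ks: "\<And>st'. st' \<in> set_pmf K \<Longrightarrow> knows R \<mu> (st' s)"
  shows "measure_pmf.prob K {st'. phi \<mu> s w st < phi \<mu> s w st'} \<ge> 1 - 1 / q"
proof -
  have "measure_pmf.prob K {st'. knows R \<mu> (st' (pth s w (Suc (phi \<mu> s w st))))}
      \<le> measure_pmf.prob K {st'. phi \<mu> s w st < phi \<mu> s w st'}"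
    by (rule measure_pmf_mono_set) (use sup ks in fastforce)
  then show ?thesis using tr by simp
qed

definition ag :: "nat \<Rightarrow> nat \<Rightarrow> gstate \<Rightarrow> gstate pmf" where
  "ag k v st = (if v = r then return_pmf st else exchange R k v (par v) st)"

lemma async_eq: "async_step R k n r par st = bind_pmf (pmf_of_set {..<n}) (\<lambda>v. ag k v st)"
  by (simp add: async_step_def ag_def)

lemma ag_support:
  assumes "wfst R k st" "st' \<in> set_pmf (ag k v st)"
  shows "wfst R k st'" "\<And>x. knows R \<mu> (st x) \<Longrightarrow> knows R \<mu> (st' x)"
  using assms exchange_support[OF assms(1), of st'] by (auto simp: ag_def split: if_splits)

lemma ag_transfer:
  assumes st: "wfst R k st" and w\<mu>: "wfv R k \<mu>" and s: "s < n" and w: "w < n" and j: "j < plen s w"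
    and kn: "knows R \<mu> (st (pth s w j))"
  shows "measure_pmf.prob (ag k (child s w j) st) {st'. knows R \<mu> (st' (pth s w (Suc j)))} \<ge> 1 - 1 / q"
proof -
  have cl: "child s w j < n" using pth_lt[OF s w] j by (auto simp: child_def)
  from edge[OF s w j] show ?thesis
  proof
    assume e: "child s w j \<noteq> r \<and> child s w j = pth s w j \<and> par (child s w j) = pth s w (Suc j)"
    have c: "child s w j = pth s w j" and p: "pth s w (Suc j) = par (pth s w j)" and nr: "pth s w j \<noteq> r"
      using e by auto
    have "pth s w j \<noteq> par (pth s w j)" using par_neq cl e by metis
    then have "1 - 1 / q \<le> measure_pmf.prob (exchange R k (pth s w j) (par (pth s w j)) st) {st'. knows R \<mu> (st' (par (pth s w j)))}"
      using exchange_transfer_p[OF st w\<mu> kn] by blast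
    then show ?thesis by (simp only: ag_def c p nr if_False)
  next
    assume e: "child s w j \<noteq> r \<and> child s w j = pth s w (Suc j) \<and> par (child s w j) = pth s w j"
    have c: "child s w j = pth s w (Suc j)" and p: "pth s w j = par (pth s w (Suc j))" and nr: "pth s w (Suc j) \<noteq> r"
      using e by auto
    have kn': "knows R \<mu> (st (par (pth s w (Suc j))))" using kn p by simp
    have "1 - 1 / q \<le> measure_pmf.prob (exchange R k (pth s w (Suc j)) (par (pth s w (Suc j))) st) {st'. knows R \<mu> (st' (pth s w (Suc j)))}"
      using exchange_transfer_u[OF st w\<mu> kn'] by blast
    then show ?thesis by (simp only: ag_def c nr if_False)
  qed
qed

lemma sync_transfer_path:
  assumes st: "wfst R k st" and w\<mu>: "wfv R k \<mu>" and s: "s < n" and w: "w < n" and j: "j < plen s w"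
    and kn: "knows R \<mu> (st (pth s w j))"
  shows "measure_pmf.prob (sync_step R k n r par st) {st'. knows R \<mu> (st' (pth s w (Suc j)))} \<ge> 1 - 1 / q"
proof -
  have cl: "child s w j < n" using pth_lt[OF s w] j by (auto simp: child_def)
  have wl: "pth s w (Suc j) < n" using pth_lt[OF s w] j by auto
  from edge[OF s w j] show ?thesis
  proof
    assume e: "child s w j \<noteq> r \<and> child s w j = pth s w j \<and> par (child s w j) = pth s w (Suc j)"
    then show ?thesis using sync_transfer[OF st w\<mu> wl, of "pth s w j"] kn cl by auto
  next
    assume e: "child s w j \<noteq> r \<and> child s w j = pth s w (Suc j) \<and> par (child s w j) = pth s w j"
    then show ?thesis using sync_transfer[OF st w\<mu> wl, of "pth s w j"] kn cl by auto
  qed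
qed

definition th :: real where "th = 4 / (3 * q)"

lemma th_props: "0 < th" "th \<le> 1" "(1 - 1 / q) / 4 + (1 / q) / th \<le> 1"
  using q_ge2 by (auto simp: th_def field_simps)

lemma async_path_bound:
  assumes I: "Inv k \<mu> s st0" and w\<mu>: "wfv R k \<mu>" and s: "s < n" and w: "w < n"
    and g: "good (\<lambda>v j. v = child s w j) (plen s w) \<sigma> 0 m"
  shows "measure_pmf.prob (run (ag k) \<sigma> st0) {st. \<not> knows R \<mu> (st w)} \<le> 4 ^ plen s w * th ^ m"
proof -
  have inv: "Inv k \<mu> s st' \<and> phi \<mu> s w st \<le> phi \<mu> s w st'" if "Inv k \<mu> s st" "st' \<in> set_pmf (ag k v st)" for v st st'
  proof -
    have w': "wfst R k st'" using ag_support(1)[OF _ that(2)] that(1) by (simp add: Inv_def)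
    have ks: "knows R \<mu> (st s)" using that(1) by (simp add: Inv_def)
    have m: "\<And>x. knows R \<mu> (st x) \<Longrightarrow> knows R \<mu> (st' x)" using ag_support(2)[OF _ that(2)] that(1) by (simp add: Inv_def)
    show ?thesis using w' m[OF ks] phi_mono[of \<mu> st s st' w, OF ks m] by (simp add: Inv_def)
  qed
  have adv: "measure_pmf.prob (ag k v st) {st'. phi \<mu> s w st < phi \<mu> s w st'} \<ge> 1 - 1 / q"
    if "Inv k \<mu> s st" "phi \<mu> s w st < plen s w" "v = child s w (phi \<mu> s w st)" for v st
  proof (rule kernel_adv)
    have ks: "knows R \<mu> (st s)" using that by (simp add: Inv_def)
    show "\<And>st'. st' \<in> set_pmf (ag k v st) \<Longrightarrow> knows R \<mu> (st' s)"
      using inv[OF that(1)] unfolding Inv_def by blast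
    show "\<And>st'. st' \<in> set_pmf (ag k v st) \<Longrightarrow> knows R \<mu> (st' (pth s w (Suc (phi \<mu> s w st)))) \<Longrightarrow>
                     knows R \<mu> (st' s) \<Longrightarrow> Suc (phi \<mu> s w st) \<le> phi \<mu> s w st'"
      by (rule phi_ge) (use that(2) in auto)
    show "measure_pmf.prob (ag k v st) {st'. knows R \<mu> (st' (pth s w (Suc (phi \<mu> s w st))))} \<ge> 1 - 1 / q"
    proof -
      have "wfst R k st" using that(1) by (simp add: Inv_def)
      from ag_transfer[OF this w\<mu> s w that(2) phi_props(2)[of \<mu> st s w, OF ks]] show ?thesis using that(3) by simp
    qed
  qed
  have g0: "good (\<lambda>v j. v = child s w j) (plen s w) \<sigma> (phi \<mu> s w st0) m"
    using good_mono_j[OF g] by simp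
  have "measure_pmf.prob (run (ag k) \<sigma> st0) {st. phi \<mu> s w st < plen s w} \<le> 4 ^ (plen s w - phi \<mu> s w st0) * th ^ m"
  proof (rule chain_bound[where I="Inv k \<mu> s" and g="ag k" and \<phi>="phi \<mu> s w" and L="plen s w"
        and H="\<lambda>v j. v = child s w j" and a=4 and \<theta>=th and \<epsilon>="1/q"])
    show "\<And>v s' s''. Inv k \<mu> s s' \<Longrightarrow> s'' \<in> set_pmf (ag k v s') \<Longrightarrow> Inv k \<mu> s s'' \<and> phi \<mu> s w s' \<le> phi \<mu> s w s''"
      by (rule inv)
    show "\<And>v s'. Inv k \<mu> s s' \<Longrightarrow> phi \<mu> s w s' < plen s w \<Longrightarrow> v = child s w (phi \<mu> s w s') \<Longrightarrow>
       1 - 1 / q \<le> measure_pmf.prob (ag k v s') {s''. phi \<mu> s w s' < phi \<mu> s w s''}"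
      by (rule adv)
    show "(1::real) \<le> 4" by simp
    show "0 < th" "th \<le> 1" by (rule th_props)+
    show "0 \<le> 1 / q" "1 / q \<le> 1" using q_ge2 by simp_all
    show "(1 - 1 / q) / 4 + 1 / q / th \<le> 1" by (rule th_props)
    show "Inv k \<mu> s st0" by (rule I)
    show "good (\<lambda>v j. v = child s w j) (plen s w) \<sigma> (phi \<mu> s w st0) m" by (rule g0)
  qed
  also have "\<dots> \<le> 4 ^ plen s w * th ^ m"
    using th_props by (intro mult_right_mono power_increasing) auto
  finally have b: "measure_pmf.prob (run (ag k) \<sigma> st0) {st. phi \<mu> s w st < plen s w} \<le> 4 ^ plen s w * th ^ m" .
  have "measure_pmf.prob (run (ag k) \<sigma> st0) {st. \<not> knows R \<mu> (st w)} \<le>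
        measure_pmf.prob (run (ag k) \<sigma> st0) {st. phi \<mu> s w st < plen s w}"
  proof (rule measure_pmf_mono_set)
    fix st assume "st \<in> set_pmf (run (ag k) \<sigma> st0)" "st \<in> {st. \<not> knows R \<mu> (st w)}"
    moreover have "Inv k \<mu> s st \<and> phi \<mu> s w st0 \<le> phi \<mu> s w st" if "st \<in> set_pmf (run (ag k) \<sigma> st0)"
      by (rule run_inv[where I="Inv k \<mu> s" and g="ag k" and \<phi>="phi \<mu> s w"]) (use inv I that in blast)+
    ultimately show "st \<in> {st. phi \<mu> s w st < plen s w}"
      using phi_notknow[OF s w] by (auto simp: Inv_def)
  qed
  then show ?thesis using b by linarith
qed

lemma sync_path_bound:
  assumes I: "Inv k \<mu> s st0" and w\<mu>: "wfv R k \<mu>" and s: "s < n" and w: "w < n"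
    and T: "plen s w + m \<le> T"
  shows "measure_pmf.prob (pmf_iter (sync_step R k n r par) T st0) {st. \<not> knows R \<mu> (st w)} \<le> 4 ^ plen s w * th ^ m"
proof -
  let ?f = "\<lambda>_::unit. sync_step R k n r par"
  have inv: "Inv k \<mu> s st' \<and> phi \<mu> s w st \<le> phi \<mu> s w st'" if "Inv k \<mu> s st" "st' \<in> set_pmf (?f v st)" for v :: unit and st st'
  proof -
    have w': "wfst R k st'" using sync_support(1)[OF _ that(2)] that(1) by (simp add: Inv_def)
    have ks: "knows R \<mu> (st s)" using that(1) by (simp add: Inv_def)
    have m: "\<And>x. knows R \<mu> (st x) \<Longrightarrow> knows R \<mu> (st' x)" using sync_support(2)[OF _ that(2)] that(1) by (simp add: Inv_def)
    show ?thesis using w' m[OF ks] phi_mono[of \<mu> st s st' w, OF ks m] by (simp add: Inv_def)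
  qed
  have adv: "measure_pmf.prob (?f v st) {st'. phi \<mu> s w st < phi \<mu> s w st'} \<ge> 1 - 1 / q"
    if "Inv k \<mu> s st" "phi \<mu> s w st < plen s w" for v :: unit and st
  proof (rule kernel_adv)
    have ks: "knows R \<mu> (st s)" using that by (simp add: Inv_def)
    show "\<And>st'. st' \<in> set_pmf (?f v st) \<Longrightarrow> knows R \<mu> (st' s)"
      using inv[OF that(1)] unfolding Inv_def by blast
    show "\<And>st'. st' \<in> set_pmf (?f v st) \<Longrightarrow> knows R \<mu> (st' (pth s w (Suc (phi \<mu> s w st)))) \<Longrightarrow>
                     knows R \<mu> (st' s) \<Longrightarrow> Suc (phi \<mu> s w st) \<le> phi \<mu> s w st'"
      by (rule phi_ge) (use that(2) in auto)
    show "measure_pmf.prob (?f v st) {st'. knows R \<mu> (st' (pth s w (Suc (phi \<mu> s w st))))} \<ge> 1 - 1 / q"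
    proof -
      have "wfst R k st" using that(1) by (simp add: Inv_def)
      from sync_transfer_path[OF this w\<mu> s w that(2) phi_props(2)[of \<mu> st s w, OF ks]] show ?thesis by simp
    qed
  qed
  have g0: "good (\<lambda>_ _. True) (plen s w) (replicate T ()) (phi \<mu> s w st0) m"
    using T by (intro good_replicate) simp
  have "measure_pmf.prob (run ?f (replicate T ()) st0) {st. phi \<mu> s w st < plen s w} \<le> 4 ^ (plen s w - phi \<mu> s w st0) * th ^ m"
  proof (rule chain_bound[where I="Inv k \<mu> s" and g="?f" and \<phi>="phi \<mu> s w" and L="plen s w"
        and H="\<lambda>_ _. True" and a=4 and \<theta>=th and \<epsilon>="1/q"])
    show "\<And>v s' s''. Inv k \<mu> s s' \<Longrightarrow> s'' \<in> set_pmf (?f v s') \<Longrightarrow> Inv k \<mu> s s'' \<and> phi \<mu> s w s' \<le> phi \<mu> s w s''"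
      by (rule inv)
    show "\<And>v s'. Inv k \<mu> s s' \<Longrightarrow> phi \<mu> s w s' < plen s w \<Longrightarrow> True \<Longrightarrow>
       1 - 1 / q \<le> measure_pmf.prob (?f v s') {s''. phi \<mu> s w s' < phi \<mu> s w s''}"
      by (rule adv)
    show "(1::real) \<le> 4" by simp
    show "0 < th" "th \<le> 1" by (rule th_props)+
    show "0 \<le> 1 / q" "1 / q \<le> 1" using q_ge2 by simp_all
    show "(1 - 1 / q) / 4 + 1 / q / th \<le> 1" by (rule th_props)
    show "Inv k \<mu> s st0" by (rule I)
    show "good (\<lambda>_ _. True) (plen s w) (replicate T ()) (phi \<mu> s w st0) m" by (rule g0)
  qed
  also have "\<dots> \<le> 4 ^ plen s w * th ^ m"
    using th_props by (intro mult_right_mono power_increasing) auto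
  finally have b: "measure_pmf.prob (run ?f (replicate T ()) st0) {st. phi \<mu> s w st < plen s w} \<le> 4 ^ plen s w * th ^ m" .
  have "measure_pmf.prob (run ?f (replicate T ()) st0) {st. \<not> knows R \<mu> (st w)} \<le>
        measure_pmf.prob (run ?f (replicate T ()) st0) {st. phi \<mu> s w st < plen s w}"
  proof (rule measure_pmf_mono_set)
    fix st assume "st \<in> set_pmf (run ?f (replicate T ()) st0)" "st \<in> {st. \<not> knows R \<mu> (st w)}"
    moreover have "Inv k \<mu> s st \<and> phi \<mu> s w st0 \<le> phi \<mu> s w st" if "st \<in> set_pmf (run ?f (replicate T ()) st0)"
      by (rule run_inv[where I="Inv k \<mu> s" and g="?f" and \<phi>="phi \<mu> s w"]) (use inv I that in blast)+
    ultimately show "st \<in> {st. phi \<mu> s w st < plen s w}"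
      using phi_notknow[OF s w] by (auto simp: Inv_def)
  qed
  then show ?thesis using b by (simp add: pmf_iter_run)
qed

end

primrec rseq :: "'a pmf \<Rightarrow> nat \<Rightarrow> 'a list pmf" where
  "rseq U 0 = return_pmf []"
| "rseq U (Suc T) = bind_pmf U (\<lambda>v. map_pmf (Cons v) (rseq U T))"

lemma pmf_iter_sched: "pmf_iter (\<lambda>s. bind_pmf U (\<lambda>v. g v s)) T s = bind_pmf (rseq U T) (\<lambda>\<sigma>. run g \<sigma> s)"
proof (induction T arbitrary: s)
  case 0 then show ?case by (simp add: bind_return_pmf)
next
  case (Suc T)
  have "pmf_iter (\<lambda>s. bind_pmf U (\<lambda>v. g v s)) (Suc T) s =
        bind_pmf (bind_pmf U (\<lambda>v. g v s)) (pmf_iter (\<lambda>s. bind_pmf U (\<lambda>v. g v s)) T)"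
    by (rule pmf_iter_front)
  also have "\<dots> = bind_pmf U (\<lambda>v. bind_pmf (g v s) (\<lambda>s'. bind_pmf (rseq U T) (\<lambda>\<sigma>. run g \<sigma> s')))"
  proof -
    have eq: "pmf_iter (\<lambda>s. bind_pmf U (\<lambda>v. g v s)) T = (\<lambda>s'. bind_pmf (rseq U T) (\<lambda>\<sigma>. run g \<sigma> s'))"
      using Suc.IH by (simp add: fun_eq_iff)
    show ?thesis by (simp add: bind_assoc_pmf eq)
  qed
  also have "\<dots> = bind_pmf U (\<lambda>v. bind_pmf (rseq U T) (\<lambda>\<sigma>. bind_pmf (g v s) (run g \<sigma>)))"
    by (subst bind_commute_pmf) simp
  also have "\<dots> = bind_pmf (rseq U (Suc T)) (\<lambda>\<sigma>. run g \<sigma> s)"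
    by (simp add: map_pmf_def bind_assoc_pmf bind_return_pmf)
  finally show ?case .
qed

lemma prob_bind_add:
  assumes "\<And>x. x \<in> set_pmf p \<Longrightarrow> measure_pmf.prob (f x) A \<le> c + indicator B x" and c: "0 \<le> c"
  shows "measure_pmf.prob (bind_pmf p f) A \<le> c + measure_pmf.prob p B"
proof -
  have "measure_pmf.prob (bind_pmf p f) A = (\<integral>x. measure_pmf.prob (f x) A \<partial>measure_pmf p)"
    by (rule measure_bind_pmf_int)
  also have "\<dots> \<le> (\<integral>x. c + indicator B x \<partial>measure_pmf p)"
    using assms(1) c
    by (intro integral_mono_AE integrable_pmf_bounded[where B="1 + c"])
       (auto simp: AE_measure_pmf_iff split: split_indicator intro: order_trans[OF measure_pmf.prob_le_1])
  also have "\<dots> = c + measure_pmf.prob p B"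
    by (subst Bochner_Integration.integral_add) (auto intro!: integrable_pmf_bounded[where B="1 + c"] simp: c split: split_indicator)
  finally show ?thesis .
qed

lemma sched_bound:
  fixes h :: real
  assumes hU: "\<And>j. j < L \<Longrightarrow> measure_pmf.prob U {v. H v j} \<ge> h" and h: "0 \<le> h" "h \<le> 1"
  shows "measure_pmf.prob (rseq U T) {\<sigma>. \<not> good H L \<sigma> j m} \<le> 4 ^ (L - j) * 4 ^ m * (1 - h / 2) ^ T"
proof (induction T arbitrary: j m)
  case 0
  have "measure_pmf.prob (rseq U 0) {\<sigma>. \<not> good H L \<sigma> j m} \<le> 1" by (rule measure_pmf.prob_le_1)
  also have "1 \<le> (4::real) ^ (L - j) * 4 ^ m * (1 - h / 2) ^ 0"
  proof -
    have "1 \<le> (4::real) ^ (L - j)" "1 \<le> (4::real) ^ m" by simp_all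
    from mult_mono[OF this] show ?thesis by simp
  qed
  finally show ?case .
next
  case (Suc T)
  have pos: "0 \<le> (4::real) ^ a * 4 ^ b * (1 - h / 2) ^ c" for a b c using h by simp
  show ?case
  proof (cases m)
    case 0 then show ?thesis using pos[of "L - j" m "Suc T"] by simp
  next
    case (Suc m')
    show ?thesis
    proof (cases "L \<le> j")
      case True
      have "{\<sigma>. \<not> good H L \<sigma> j m} \<inter> set_pmf (rseq U (Suc T)) = {}"
        using True Suc by (auto)
      then have "measure_pmf.prob (rseq U (Suc T)) {\<sigma>. \<not> good H L \<sigma> j m} = 0"
        by (simp add: measure_pmf_zero_iff inf_commute)
      then show ?thesis using pos[of "L - j" m "Suc T"] by simp
    next
      case nL: False
      define \<gamma> where "\<gamma> = (1 - h / 2) ^ T"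
      have gp: "0 \<le> \<gamma>" using h by (simp add: \<gamma>_def)
      define A where "A = 4 ^ (L - Suc j) * 4 ^ Suc m' * \<gamma> + 4 ^ (L - j) * 4 ^ m' * \<gamma>"
      define B where "B = 4 ^ (L - j) * 4 ^ Suc m' * \<gamma>"
      have LS: "(4::real) ^ (L - j) = 4 * 4 ^ (L - Suc j)" using nL
        by (metis Suc_diff_Suc not_le power_Suc)
      have AB: "A = B / 2" by (simp add: A_def B_def LS)
      have "measure_pmf.prob (rseq U (Suc T)) {\<sigma>. \<not> good H L \<sigma> j m} \<le> h * A + (1 - h) * B"
        unfolding rseq.simps
      proof (rule prob_bind_two[where Q="\<lambda>v. H v j"])
        fix v assume "v \<in> set_pmf U" "H v j"
        have "measure_pmf.prob (map_pmf (Cons v) (rseq U T)) {\<sigma>. \<not> good H L \<sigma> j m}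
            = measure_pmf.prob (rseq U T) ({\<sigma>. \<not> good H L \<sigma> (Suc j) (Suc m')} \<union> {\<sigma>. \<not> good H L \<sigma> j m'})"
        proof -
          have "Cons v -` {\<sigma>. \<not> good H L \<sigma> j m} = {\<sigma>. \<not> good H L \<sigma> (Suc j) (Suc m')} \<union> {\<sigma>. \<not> good H L \<sigma> j m'}"
            using \<open>H v j\<close> nL Suc by auto
          then show ?thesis by simp
        qed
        also have "\<dots> \<le> measure_pmf.prob (rseq U T) {\<sigma>. \<not> good H L \<sigma> (Suc j) (Suc m')} +
                       measure_pmf.prob (rseq U T) {\<sigma>. \<not> good H L \<sigma> j m'}"
          by (rule measure_Un_le) auto
        also have "\<dots> \<le> A" unfolding A_def \<gamma>_def by (intro add_mono Suc.IH)
        finally show "measure_pmf.prob (map_pmf (Cons v) (rseq U T)) {\<sigma>. \<not> good H L \<sigma> j m} \<le> A" .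
      next
        fix v assume "v \<in> set_pmf U"
        show "measure_pmf.prob (map_pmf (Cons v) (rseq U T)) {\<sigma>. \<not> good H L \<sigma> j m} \<le> B"
        proof (cases "H v j")
          case True
          have "measure_pmf.prob (map_pmf (Cons v) (rseq U T)) {\<sigma>. \<not> good H L \<sigma> j m}
              = measure_pmf.prob (rseq U T) ({\<sigma>. \<not> good H L \<sigma> (Suc j) (Suc m')} \<union> {\<sigma>. \<not> good H L \<sigma> j m'})"
          proof -
            have "Cons v -` {\<sigma>. \<not> good H L \<sigma> j m} = {\<sigma>. \<not> good H L \<sigma> (Suc j) (Suc m')} \<union> {\<sigma>. \<not> good H L \<sigma> j m'}"
              using True nL Suc by auto
            then show ?thesis by simp
          qed
          also have "\<dots> \<le> measure_pmf.prob (rseq U T) {\<sigma>. \<not> good H L \<sigma> (Suc j) (Suc m')} +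
                         measure_pmf.prob (rseq U T) {\<sigma>. \<not> good H L \<sigma> j m'}"
            by (rule measure_Un_le) auto
          also have "\<dots> \<le> A" unfolding A_def \<gamma>_def by (intro add_mono Suc.IH)
          also have "\<dots> \<le> B" using AB gp by (simp add: B_def)
          finally show ?thesis .
        next
          case False
          have "measure_pmf.prob (map_pmf (Cons v) (rseq U T)) {\<sigma>. \<not> good H L \<sigma> j m}
              = measure_pmf.prob (rseq U T) {\<sigma>. \<not> good H L \<sigma> j (Suc m')}"
          proof -
            have "Cons v -` {\<sigma>. \<not> good H L \<sigma> j m} = {\<sigma>. \<not> good H L \<sigma> j (Suc m')}"
              using False nL Suc by auto
            then show ?thesis by simp
          qed
          also have "\<dots> \<le> B" unfolding B_def \<gamma>_def by (rule Suc.IH)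
          finally show ?thesis .
        qed
      next
        show "A \<le> B" using AB gp by (simp add: B_def)
        show "h \<le> measure_pmf.prob U {v. H v j}" using hU nL by simp
      qed
      also have "\<dots> = 4 ^ (L - j) * 4 ^ m * (1 - h / 2) ^ Suc T"
        by (simp add: AB B_def \<gamma>_def Suc algebra_simps)
      finally show ?thesis .
    qed
  qed
qed


context gtree
begin

definition NZ :: "nat \<Rightarrow> nat list set" where "NZ k = {\<mu>. wfv R k \<mu> \<and> \<mu> \<noteq> vzero R k}"

lemma NZ_sub: "NZ k \<subseteq> {xs. set xs \<subseteq> carrier R \<and> length xs = k}"
  by (auto simp: NZ_def wfv_def)

lemma NZ_fin: "finite (NZ k)"
  using finite_subset[OF NZ_sub finite_lists_length_eq[OF fin]] .

lemma card_NZ: "real (card (NZ k)) \<le> q ^ k"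
proof -
  have "card (NZ k) \<le> card {xs. set xs \<subseteq> carrier R \<and> length xs = k}"
    by (rule card_mono[OF finite_lists_length_eq[OF fin] NZ_sub])
  also have "\<dots> = card (carrier R) ^ k" by (rule card_lists_length_eq[OF fin])
  finally show ?thesis unfolding q_def by (metis of_nat_le_iff of_nat_power)
qed

definition src :: "nat \<Rightarrow> (nat \<Rightarrow> nat) \<Rightarrow> nat list \<Rightarrow> nat" where
  "src k loc \<mu> = loc (LEAST i. i < k \<and> \<mu> ! i \<noteq> \<zero>)"

lemma NZ_idx: "\<mu> \<in> NZ k \<Longrightarrow> \<exists>i<k. \<mu> ! i \<noteq> \<zero>"
proof (rule ccontr)
  assume a: "\<mu> \<in> NZ k" "\<not> (\<exists>i<k. \<mu> ! i \<noteq> \<zero>)"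
  then have "\<mu> = vzero R k" by (intro list_eqI_k[of _ k]) (auto simp: NZ_def wfv_def)
  then show False using a by (simp add: NZ_def)
qed

lemma wfst_init: "wfst R k (init_state R k loc)"
  by (auto simp: wfst_def wfS_def init_state_def)

lemma init_inv:
  assumes loc: "\<forall>i<k. loc i < n" and \<mu>: "\<mu> \<in> NZ k"
  shows "Inv k \<mu> (src k loc \<mu>) (init_state R k loc) \<and> src k loc \<mu> < n"
proof -
  define i0 where "i0 = (LEAST i. i < k \<and> \<mu> ! i \<noteq> \<zero>)"
  have i0: "i0 < k" "\<mu> ! i0 \<noteq> \<zero>" using NZ_idx[OF \<mu>] unfolding i0_def by (metis (mono_tags, lifting) LeastI)+
  have "unitv R k i0 \<in> set (init_state R k loc (loc i0))" using i0 by (auto simp: init_state_def)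
  moreover have "dot R \<mu> (unitv R k i0) \<noteq> \<zero>" using i0 \<mu> by (simp add: dot_unitv NZ_def)
  ultimately have "knows R \<mu> (init_state R k loc (loc i0))" unfolding knows_def by blast
  then show ?thesis using wfst_init loc i0 by (simp add: Inv_def src_def i0_def[symmetric])
qed

lemma notall:
  assumes "wfst R k st" "\<not> all_learned R k n st"
  shows "\<exists>\<mu>\<in>NZ k. \<exists>w<n. \<not> knows R \<mu> (st w)"
proof -
  obtain w where w: "w < n" "\<not> learned_all R k (st w)" using assms(2) by (auto simp: all_learned_def)
  then have "\<not> (\<forall>\<mu>. wfv R k \<mu> \<and> \<mu> \<noteq> vzero R k \<longrightarrow> knows R \<mu> (st w))"
    using duality_learned[of k "st w"] assms(1) by (auto simp: wfst_def)
  then show ?thesis using w by (auto simp: NZ_def)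
qed

lemma plen_16: "s < n \<Longrightarrow> w < n \<Longrightarrow> (4::real) ^ plen s w \<le> 16 ^ lmax n r par"
proof -
  assume "s < n" "w < n"
  then have "(4::real) ^ plen s w \<le> 4 ^ (2 * lmax n r par)" using plen_le by (intro power_increasing) auto
  also have "\<dots> = 16 ^ lmax n r par" by (simp add: power_mult)
  finally show ?thesis .
qed

lemma union_bound:
  assumes "\<And>st. st \<in> set_pmf p \<Longrightarrow> wfst R k st"
    and "\<And>\<mu> w. \<mu> \<in> NZ k \<Longrightarrow> w < n \<Longrightarrow> measure_pmf.prob p {st. \<not> knows R \<mu> (st w)} \<le> b"
  shows "measure_pmf.prob p {st. \<not> all_learned R k n st} \<le> real (card (NZ k)) * n * b"
proof -
  let ?I = "NZ k \<times> {..<n}"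
  let ?A = "\<lambda>(\<mu>, w). {st. \<not> knows R \<mu> (st w)}"
  have "measure_pmf.prob p {st. \<not> all_learned R k n st} \<le> measure_pmf.prob p (\<Union>i\<in>?I. ?A i)"
    by (rule measure_pmf_mono_set) (use assms(1) notall in fastforce)
  also have "\<dots> \<le> (\<Sum>i\<in>?I. measure_pmf.prob p (?A i))"
    by (rule measure_pmf.finite_measure_subadditive_finite) (auto simp: NZ_fin)
  also have "\<dots> \<le> (\<Sum>i\<in>?I. b)"
    by (intro sum_mono) (use assms(2) in auto)
  also have "\<dots> = real (card (NZ k)) * n * b" by (simp add: card_cartesian_product)
  finally show ?thesis .
qed

lemma sync_final:
  assumes loc: "\<forall>i<k. loc i < n" and T: "2 * lmax n r par + m \<le> T"
  shows "measure_pmf.prob (pmf_iter (sync_step R k n r par) T (init_state R k loc)) {st. \<not> all_learned R k n st}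
     \<le> real (card (NZ k)) * n * (16 ^ lmax n r par * th ^ m)"
proof (rule union_bound)
  fix st assume "st \<in> set_pmf (pmf_iter (sync_step R k n r par) T (init_state R k loc))"
  then have st: "st \<in> set_pmf (run (\<lambda>_::unit. sync_step R k n r par) (replicate T ()) (init_state R k loc))"
    by (simp add: pmf_iter_run)
  have inv': "\<And>v s s'. wfst R k s \<Longrightarrow> s' \<in> set_pmf ((\<lambda>_::unit. sync_step R k n r par) v s) \<Longrightarrow> wfst R k s' \<and> (0::nat) \<le> 0"
    using sync_support(1) by blast
  have "wfst R k st \<and> (0::nat) \<le> 0"
    by (rule run_inv[where I="wfst R k" and \<phi>="\<lambda>_. 0::nat" and g="\<lambda>_::unit. sync_step R k n r par"])
       (use inv' wfst_init st in blast)+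
  then show "wfst R k st" by simp
next
  fix \<mu> w assume \<mu>: "\<mu> \<in> NZ k" and w: "w < n"
  note ii = init_inv[OF loc \<mu>]
  have "measure_pmf.prob (pmf_iter (sync_step R k n r par) T (init_state R k loc)) {st. \<not> knows R \<mu> (st w)}
        \<le> 4 ^ plen (src k loc \<mu>) w * th ^ m"
    by (rule sync_path_bound) (use ii \<mu> w T plen_le[of "src k loc \<mu>" w] in \<open>auto simp: NZ_def\<close>)
  also have "\<dots> \<le> 16 ^ lmax n r par * th ^ m"
    using plen_16[of "src k loc \<mu>" w] ii w th_props by (intro mult_right_mono) auto
  finally show "measure_pmf.prob (pmf_iter (sync_step R k n r par) T (init_state R k loc)) {st. \<not> knows R \<mu> (st w)}
        \<le> 16 ^ lmax n r par * th ^ m" .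
qed


lemma n_pos: "0 < n" using r_lt by simp

lemma child_lt: "s < n \<Longrightarrow> w < n \<Longrightarrow> j < plen s w \<Longrightarrow> child s w j < n"
  using pth_lt by (auto simp: child_def)

lemma async_final:
  assumes loc: "\<forall>i<k. loc i < n"
  shows "measure_pmf.prob (pmf_iter (async_step R k n r par) T (init_state R k loc)) {st. \<not> all_learned R k n st}
     \<le> real (card (NZ k)) * n * (16 ^ lmax n r par * th ^ m) + real n * n * (16 ^ lmax n r par * 4 ^ m * (1 - 1 / (2 * n)) ^ T)"
proof -
  define U where "U = pmf_of_set {..<n}"
  have eqf: "async_step R k n r par = (\<lambda>st. bind_pmf U (\<lambda>v. ag k v st))"
    by (simp add: fun_eq_iff async_eq U_def)
  define bad where "bad = {\<sigma>. \<exists>s<n. \<exists>w<n. \<not> good (\<lambda>v j. v = child s w j) (plen s w) \<sigma> 0 m}"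
  define C1 where "C1 = real (card (NZ k)) * n * (16 ^ lmax n r par * th ^ m)"
  have C1: "0 \<le> C1" using th_props by (simp add: C1_def)
  have inv': "\<And>v s s'. wfst R k s \<Longrightarrow> s' \<in> set_pmf (ag k v s) \<Longrightarrow> wfst R k s' \<and> (0::nat) \<le> 0"
    using ag_support(1) by blast
  have "measure_pmf.prob (bind_pmf (rseq U T) (\<lambda>\<sigma>. run (ag k) \<sigma> (init_state R k loc))) {st. \<not> all_learned R k n st}
        \<le> C1 + measure_pmf.prob (rseq U T) bad"
  proof (rule prob_bind_add[OF _ C1])
    fix \<sigma> assume "\<sigma> \<in> set_pmf (rseq U T)"
    show "measure_pmf.prob (run (ag k) \<sigma> (init_state R k loc)) {st. \<not> all_learned R k n st} \<le> C1 + indicator bad \<sigma>"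
    proof (cases "\<sigma> \<in> bad")
      case True
      have "measure_pmf.prob (run (ag k) \<sigma> (init_state R k loc)) {st. \<not> all_learned R k n st} \<le> 1"
        by (rule measure_pmf.prob_le_1)
      moreover have "indicator bad \<sigma> = (1::real)" using True by simp
      ultimately show ?thesis using C1 by linarith
    next
      case False
      have "measure_pmf.prob (run (ag k) \<sigma> (init_state R k loc)) {st. \<not> all_learned R k n st} \<le> C1"
        unfolding C1_def
      proof (rule union_bound)
        fix st assume st: "st \<in> set_pmf (run (ag k) \<sigma> (init_state R k loc))"
        have "wfst R k st \<and> (0::nat) \<le> 0"
          by (rule run_inv[where I="wfst R k" and \<phi>="\<lambda>_. 0::nat" and g="ag k"])
             (use inv' wfst_init st in blast)+
        then show "wfst R k st" by simp
      next
        fix \<mu> w assume \<mu>: "\<mu> \<in> NZ k" and w: "w < n"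
        note ii = init_inv[OF loc \<mu>]
        have "measure_pmf.prob (run (ag k) \<sigma> (init_state R k loc)) {st. \<not> knows R \<mu> (st w)}
              \<le> 4 ^ plen (src k loc \<mu>) w * th ^ m"
          by (rule async_path_bound) (use ii \<mu> w False in \<open>auto simp: NZ_def bad_def\<close>)
        also have "\<dots> \<le> 16 ^ lmax n r par * th ^ m"
          using plen_16[of "src k loc \<mu>" w] ii w th_props by (intro mult_right_mono) auto
        finally show "measure_pmf.prob (run (ag k) \<sigma> (init_state R k loc)) {st. \<not> knows R \<mu> (st w)}
              \<le> 16 ^ lmax n r par * th ^ m" .
      qed
      moreover have "indicator bad \<sigma> = (0::real)" using False by simp
      ultimately show ?thesis by linarith
    qed
  qed
  also have "measure_pmf.prob (rseq U T) bad \<le> real n * n * (16 ^ lmax n r par * 4 ^ m * (1 - 1 / (2 * n)) ^ T)"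
  proof -
    let ?I = "{..<n} \<times> {..<n}"
    let ?A = "\<lambda>(s, w). {\<sigma>. \<not> good (\<lambda>v j. v = child s w j) (plen s w) \<sigma> 0 m}"
    have "bad = (\<Union>i\<in>?I. ?A i)" by (auto simp: bad_def)
    then have "measure_pmf.prob (rseq U T) bad \<le> (\<Sum>i\<in>?I. measure_pmf.prob (rseq U T) (?A i))"
      by (simp add: measure_pmf.finite_measure_subadditive_finite)
    also have "\<dots> \<le> (\<Sum>i\<in>?I. 16 ^ lmax n r par * 4 ^ m * (1 - 1 / (2 * n)) ^ T)"
    proof (rule sum_mono)
      fix i assume i: "i \<in> ?I"
      obtain s w where sw: "i = (s, w)" "s < n" "w < n" using i by auto
      have hU: "measure_pmf.prob U {v. v = child s w j} \<ge> 1 / real n" if "j < plen s w" for j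
      proof -
        have c: "child s w j < n" using child_lt sw that by auto
        have "{v. v = child s w j} = {child s w j}" by auto
        moreover have "measure_pmf.prob U {child s w j} = 1 / real n"
          using c n_pos by (simp add: U_def measure_pmf_single pmf_of_set lessThan_empty_iff)
        ultimately show ?thesis by simp
      qed
      have "measure_pmf.prob (rseq U T) (?A i) \<le> 4 ^ (plen s w - 0) * 4 ^ m * (1 - (1 / real n) / 2) ^ T"
        unfolding sw(1) prod.case
        by (rule sched_bound[where U=U and H="\<lambda>v j. v = child s w j" and L="plen s w" and h="1 / real n"])
           (use hU n_pos in auto)
      also have "\<dots> \<le> 16 ^ lmax n r par * 4 ^ m * (1 - 1 / (2 * n)) ^ T"
      proof -
        have e: "1 - 1 / real n / 2 = 1 - 1 / real (2 * n)" by simp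
        have nn: "0 \<le> 1 - 1 / real (2 * n)" using n_pos by (simp add: field_simps)
        show ?thesis unfolding e minus_nat.diff_0
          using plen_16[OF sw(2,3)] nn by (intro mult_right_mono) auto
      qed
      finally show "measure_pmf.prob (rseq U T) (?A i) \<le> 16 ^ lmax n r par * 4 ^ m * (1 - 1 / (2 * n)) ^ T" .
    qed
    also have "\<dots> = real n * n * (16 ^ lmax n r par * 4 ^ m * (1 - 1 / (2 * n)) ^ T)"
      by (simp add: card_cartesian_product)
    finally show ?thesis .
  qed
  finally show ?thesis unfolding eqf pmf_iter_sched C1_def by simp
qed

end

lemma ln_ge1: "3 \<le> n \<Longrightarrow> 1 \<le> ln (real n)"
proof -
  assume "3 \<le> n"
  then have "exp 1 \<le> real n" using exp_le by linarith
  then show ?thesis using ln_ge_iff[of "real n" 1] by (metis exp_gt_zero less_le_trans ln_exp ln_le_cancel_iff)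
qed

lemma c_bounds:
  assumes "3 \<le> n"
  shows "real (nat \<lceil>ln (real n)\<rceil>) \<le> 2 * ln (real n)" "real n \<le> exp (real (nat \<lceil>ln (real n)\<rceil>))"
proof -
  have l1: "1 \<le> ln (real n)" using ln_ge1[OF assms] .
  have cr: "real (nat \<lceil>ln (real n)\<rceil>) = real_of_int \<lceil>ln (real n)\<rceil>" using l1 by simp
  show "real (nat \<lceil>ln (real n)\<rceil>) \<le> 2 * ln (real n)"
    unfolding cr using l1 ceiling_le_iff[of "ln (real n)"] by linarith
  have "real n = exp (ln (real n))" using assms by simp
  also have "\<dots> \<le> exp (real (nat \<lceil>ln (real n)\<rceil>))" unfolding cr by simp
  finally show "real n \<le> exp (real (nat \<lceil>ln (real n)\<rceil>))" .
qed

lemma term1: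
  fixes q N :: real and n k l c m :: nat
  assumes n: "3 \<le> n" and q: "2 \<le> q" and N: "N \<le> q ^ k" "0 \<le> N" and m: "m = 8 * k + 8 * l + 6 * c"
    and c: "real n \<le> exp (real c)"
  shows "N * n * (16 ^ l * (4 / (3 * q)) ^ m) \<le> 1 / n"
proof -
  have qk: "q ^ k * (4 / (3 * q)) ^ m \<le> 2 ^ k * (2 / 3) ^ m"
  proof -
    have mk: "m = k + (m - k)" using m by simp
    have pm: "(4 / (3 * q)) ^ m = (4 / (3 * q)) ^ k * (4 / (3 * q)) ^ (m - k)"
      using mk by (metis power_add)
    have "q ^ k * (4 / (3 * q)) ^ m = (q * (4 / (3 * q))) ^ k * (4 / (3 * q)) ^ (m - k)"
      unfolding pm power_mult_distrib by (simp add: mult.assoc)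
    also have "\<dots> = (4 / 3) ^ k * (4 / (3 * q)) ^ (m - k)" using q by simp
    also have "\<dots> \<le> (4 / 3) ^ k * (2 / 3) ^ (m - k)"
      using q by (intro mult_left_mono power_mono) (auto simp: field_simps)
    also have "\<dots> = 2 ^ k * (2 / 3) ^ m"
    proof -
      have p2: "((2::real) / 3) ^ m = (2 / 3) ^ k * (2 / 3) ^ (m - k)" using mk by (metis power_add)
      have "(4::real) / 3 = 2 * (2 / 3)" by simp
      then have "((4::real) / 3) ^ k = 2 ^ k * (2 / 3) ^ k" by (metis power_mult_distrib)
      then show ?thesis unfolding p2 by (simp add: mult.assoc)
    qed
    finally show ?thesis .
  qed
  have big: "real n ^ 2 * 2 ^ k * 16 ^ l \<le> (3 / 2) ^ m"
  proof -
    have e2: "exp (2::real) \<le> (3 / 2) ^ 6"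
    proof -
      have "exp (2::real) = exp 1 ^ 2" by (simp add: exp_of_nat_mult[symmetric])
      also have "\<dots> \<le> 3 ^ 2" using exp_le by (intro power_mono) auto
      also have "(3::real) ^ 2 \<le> (3 / 2) ^ 6" by (simp add: power_divide)
      finally show ?thesis .
    qed
    have "real n ^ 2 \<le> exp (real c) ^ 2" using c n by (intro power_mono) auto
    also have "\<dots> = exp 2 ^ c" by (simp add: exp_of_nat_mult[symmetric] power_mult[symmetric] mult.commute)
    also have "\<dots> \<le> ((3 / 2) ^ 6) ^ c" using e2 by (intro power_mono) auto
    finally have a: "real n ^ 2 \<le> ((3 / 2) ^ 6) ^ c" .
    have t16: "(16::real) \<le> (3 / 2) ^ 8" by (simp add: power_divide)
    have b: "(2::real) ^ k \<le> ((3 / 2) ^ 8) ^ k" using t16 by (intro power_mono) auto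
    have d: "(16::real) ^ l \<le> ((3 / 2) ^ 8) ^ l" using t16 by (intro power_mono) auto
    have "real n ^ 2 * 2 ^ k * 16 ^ l \<le> ((3 / 2) ^ 6) ^ c * ((3 / 2) ^ 8) ^ k * ((3 / 2) ^ 8) ^ l"
      using a b d by (intro mult_mono) auto
    also have "\<dots> = (3 / 2) ^ m" by (simp add: m power_add power_mult[symmetric] algebra_simps)
    finally show ?thesis .
  qed
  have "N * n * (16 ^ l * (4 / (3 * q)) ^ m) \<le> q ^ k * n * (16 ^ l * (4 / (3 * q)) ^ m)"
    using N q by (intro mult_right_mono) auto
  also have "\<dots> = n * 16 ^ l * (q ^ k * (4 / (3 * q)) ^ m)" by (simp add: algebra_simps)
  also have "\<dots> \<le> n * 16 ^ l * (2 ^ k * (2 / 3) ^ m)" using qk by (intro mult_left_mono) auto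
  also have "\<dots> = (real n ^ 2 * 2 ^ k * 16 ^ l) * (2 / 3) ^ m / n" using n by (simp add: power2_eq_square field_simps)
  also have "\<dots> \<le> (3 / 2) ^ m * (2 / 3) ^ m / n" using big n by (intro divide_right_mono mult_right_mono) auto
  also have "\<dots> = 1 / n" by (simp add: power_mult_distrib[symmetric])
  finally show ?thesis .
qed

lemma term2:
  fixes n k l c m T :: nat
  assumes n: "3 \<le> n" and m: "m = 8 * k + 8 * l + 6 * c"
    and c: "real n \<le> exp (real c)" and T: "2 * (16 * k + 20 * l + 15 * c) \<le> real T"
  shows "real n * n * (16 ^ l * 4 ^ m * (1 - 1 / (2 * n)) ^ (T * n)) \<le> 1 / n"
proof -
  have x: "(1 - 1 / (2 * real n)) ^ (T * n) \<le> exp (- real T / 2)"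
  proof -
    have "0 \<le> 1 - 1 / (2 * real n)" using n by (simp add: field_simps)
    then have "(1 - 1 / (2 * real n)) ^ (T * n) \<le> exp (- (1 / (2 * real n))) ^ (T * n)"
      by (intro power_mono) (auto intro: exp_ge_add_one_self[THEN order_trans[rotated]] simp: exp_ge_add_one_self)
    also have "\<dots> = exp (- real T / 2)" using n by (simp add: exp_of_nat_mult[symmetric] field_simps)
    finally show ?thesis .
  qed
  have e4: "(4::real) \<le> exp 2"
  proof -
    have "(2::real) \<le> exp 1" using exp_ge_add_one_self[of 1] by simp
    then have "(2::real) ^ 2 \<le> exp 1 ^ 2" by (intro power_mono) auto
    then show ?thesis by (simp add: exp_of_nat_mult[symmetric])
  qed
  have "real n ^ 3 * 16 ^ l * 4 ^ m \<le> exp (real c) ^ 3 * (exp 2 ^ 2) ^ l * exp 2 ^ m"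
    using c n e4 power_mono[OF e4, of 2] by (intro mult_mono power_mono) auto
  also have "\<dots> = exp (3 * c + 4 * l + 2 * m)"
    by (simp add: exp_add exp_of_nat_mult[symmetric] power_mult[symmetric] mult.commute)
  also have "\<dots> \<le> exp (real T / 2)" using T m by simp
  finally have b: "real n ^ 3 * 16 ^ l * 4 ^ m \<le> exp (real T / 2)" .
  have "real n * n * (16 ^ l * 4 ^ m * (1 - 1 / (2 * n)) ^ (T * n)) \<le> real n * n * (16 ^ l * 4 ^ m * exp (- real T / 2))"
    using x by (intro mult_left_mono) auto
  also have "\<dots> = (real n ^ 3 * 16 ^ l * 4 ^ m) * exp (- real T / 2) / n"
    using n by (simp add: power3_eq_cube field_simps)
  also have "\<dots> \<le> exp (real T / 2) * exp (- real T / 2) / n"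
    using b by (intro divide_right_mono mult_right_mono) auto
  also have "\<dots> = 1 / n" by (simp add: exp_add[symmetric])
  finally show ?thesis .
qed


lemma prob_neg: "measure_pmf.prob p {x. P x} = 1 - measure_pmf.prob p {x. \<not> P x}"
proof -
  have "measure_pmf.prob p (UNIV - {x. \<not> P x}) = 1 - measure_pmf.prob p {x. \<not> P x}"
    using measure_pmf.prob_compl[of "{x. \<not> P x}" p] by simp
  moreover have "UNIV - {x. \<not> P x} = {x. P x}" by auto
  ultimately show ?thesis by simp
qed

theorem lemma1:
  "\<exists>C>0. \<forall>(R :: nat ring) n r par k loc.
     field R \<and> finite (carrier R) \<and> is_rooted_tree n r par \<and> (\<forall>i<k. loc i < n) \<longrightarrow>
     (let T = nat \<lceil>C * (real k + ln (real n) + real (lmax n r par))\<rceil> in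
        measure_pmf.prob (pmf_iter (sync_step R k n r par) T (init_state R k loc))
            {st. all_learned R k n st} \<ge> 1 - 2 / real n
      \<and> measure_pmf.prob (pmf_iter (async_step R k n r par) (T * n) (init_state R k loc))
            {st. all_learned R k n st} \<ge> 1 - 2 / real n)"
proof (intro exI[of _ "100::real"] conjI allI impI)
  show "(0::real) < 100" by simp
  fix R :: "nat ring" and n r :: nat and par :: "nat \<Rightarrow> nat" and k :: nat and loc :: "nat \<Rightarrow> nat"
  assume H: "field R \<and> finite (carrier R) \<and> is_rooted_tree n r par \<and> (\<forall>i<k. loc i < n)"
  define T where "T = nat \<lceil>100 * (real k + ln (real n) + real (lmax n r par))\<rceil>"
  have npos: "0 < n" using H by (auto simp: is_rooted_tree_def)
  have main: "measure_pmf.prob (pmf_iter (sync_step R k n r par) T (init_state R k loc))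
            {st. all_learned R k n st} \<ge> 1 - 2 / real n
      \<and> measure_pmf.prob (pmf_iter (async_step R k n r par) (T * n) (init_state R k loc))
            {st. all_learned R k n st} \<ge> 1 - 2 / real n"
  proof (cases "n \<le> 2")
    case True
    then have "1 - 2 / real n \<le> 0" using npos by (simp add: field_simps)
    then show ?thesis by (meson measure_nonneg order_trans)
  next
    case False
    then have n3: "3 \<le> n" by simp
    have "gtree R n r par"
      using H unfolding gtree_def gtree_axioms_def ffield_def ffield_axioms_def nfield_def by auto
    then interpret G: gtree R n r par .
    define l where "l = lmax n r par"
    define c where "c = nat \<lceil>ln (real n)\<rceil>"
    define m where "m = 8 * k + 8 * l + 6 * c"
    note cb = c_bounds[OF n3, folded c_def]
    have l1: "1 \<le> ln (real n)" using ln_ge1[OF n3] .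
    have Tr: "100 * (real k + ln (real n) + real l) \<le> real T"
      unfolding T_def l_def by linarith
    have T1: "2 * l + m \<le> T"
    proof -
      have "real (2 * l + m) \<le> real T" using Tr cb l1 by (simp add: m_def)
      then show ?thesis by linarith
    qed
    have T2: "2 * (16 * k + 20 * l + 15 * c) \<le> real T" using Tr cb l1 by simp
    have C1: "real (card (G.NZ k)) * n * (16 ^ l * G.th ^ m) \<le> 1 / n"
      unfolding G.th_def
      by (rule term1[OF n3 G.q_ge2 G.card_NZ _ m_def cb(2)]) simp
    have C2: "real n * n * (16 ^ l * 4 ^ m * (1 - 1 / (2 * n)) ^ (T * n)) \<le> 1 / n"
      by (rule term2[OF n3 m_def cb(2) T2])
    have s1: "measure_pmf.prob (pmf_iter (sync_step R k n r par) T (init_state R k loc)) {st. \<not> all_learned R k n st} \<le> 1 / n"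
    proof -
      have loc: "\<forall>i<k. loc i < n" using H by simp
      show ?thesis using G.sync_final[OF loc T1[unfolded l_def]] C1 unfolding l_def by linarith
    qed
    have s2: "measure_pmf.prob (pmf_iter (async_step R k n r par) (T * n) (init_state R k loc)) {st. \<not> all_learned R k n st} \<le> 2 / n"
    proof -
      have loc: "\<forall>i<k. loc i < n" using H by simp
      have "1 / real n + 1 / real n = 2 / real n" by simp
      then show ?thesis using G.async_final[OF loc, of "T * n" m] C1 C2 unfolding l_def by linarith
    qed
    have e1: "measure_pmf.prob (pmf_iter (sync_step R k n r par) T (init_state R k loc)) {st. all_learned R k n st}
       = 1 - measure_pmf.prob (pmf_iter (sync_step R k n r par) T (init_state R k loc)) {st. \<not> all_learned R k n st}"
      by (rule prob_neg)
    have e2: "measure_pmf.prob (pmf_iter (async_step R k n r par) (T * n) (init_state R k loc)) {st. all_learned R k n st}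
       = 1 - measure_pmf.prob (pmf_iter (async_step R k n r par) (T * n) (init_state R k loc)) {st. \<not> all_learned R k n st}"
      by (rule prob_neg)
    have "1 / real n \<le> 2 / real n" using npos by (simp add: divide_right_mono)
    then show ?thesis using s1 s2 e1 e2 by linarith
  qed
  then show "let T = nat \<lceil>100 * (real k + ln (real n) + real (lmax n r par))\<rceil> in
        measure_pmf.prob (pmf_iter (sync_step R k n r par) T (init_state R k loc))
            {st. all_learned R k n st} \<ge> 1 - 2 / real n
      \<and> measure_pmf.prob (pmf_iter (async_step R k n r par) (T * n) (init_state R k loc))
            {st. all_learned R k n st} \<ge> 1 - 2 / real n"
    unfolding Let_def T_def .
qed


end
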